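(* There is a first order formula $\theta(u,v)$ of the vocabulary $\{+,\cdot,+',\cdot'\}$ such that $P(+,\cdot,\{+',\cdot'\})\cup P(+',\cdot',\{+,\cdot\})\vdash \mathrm{ISOM}(+,\cdot,+',\cdot')$, where $\mathrm{ISOM}(+,\cdot,+',\cdot')$ is the first order sentence expressing that the relation defined by $\theta(u,v)$ is (the graph of) an isomorphism from the structure given by $+,\cdot$ onto the structure given by $+',\cdot'$ (i.e. it is a bijective function $\pi$ of the domain with $\pi(x+y)=\pi(x)+'\pi(y)$ and $\pi(x\cdot y)=\pi(x)\cdot'\pi(y)$ for all $x,y$).
   Context: $+,\cdot,+',\cdot'$ are binary function symbols. $P(+,\cdot)$ denotes the first order Peano axioms in the vocabulary $\{+,\cdot\}$, with Induction Schema $\forall x_1\ldots x_n((\phi(0,\bar x)\wedge\forall y(\phi(y,\bar x)\to\phi(y+1,\bar x)))\to\forall y\phi(y,\bar x))$, where $0$ and $1$ are defined terms denoting the identity elements of $+$ and $\cdot$. For a vocabulary $L$, $P(+,\cdot,L)$ denotes the extension of $P(+,\cdot)$ in which the Induction Schema is taken for all first order formulas of the vocabulary $\{+,\cdot\}\cup L$; $P(+',\cdot',L)$ is defined analogously for $\{+',\cdot'\}$. $\vdash$ is first order provability. *)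

theory Defs
  imports Main
begin

datatype fsym = Plus | Times | Plus' | Times'

datatype trm = Var nat | Fn fsym trm trm

datatype form = Eq trm trm | Bot | Imp form form | All nat form

definition Neg :: "form \<Rightarrow> form" where "Neg p = Imp p Bot"
definition And :: "form \<Rightarrow> form \<Rightarrow> form" where "And p q = Neg (Imp p (Neg q))"
definition Ex :: "nat \<Rightarrow> form \<Rightarrow> form" where "Ex x p = Neg (All x (Neg p))"

fun tvars :: "trm \<Rightarrow> nat set" where
  "tvars (Var x) = {x}"
| "tvars (Fn f s t) = tvars s \<union> tvars t"

fun fv :: "form \<Rightarrow> nat set" where
  "fv (Eq s t) = tvars s \<union> tvars t"
| "fv Bot = {}"
| "fv (Imp p q) = fv p \<union> fv q"
| "fv (All x p) = fv p - {x}"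

fun tmax :: "trm \<Rightarrow> nat" where
  "tmax (Var x) = x"
| "tmax (Fn f s t) = max (tmax s) (tmax t)"

fun fmax :: "form \<Rightarrow> nat" where
  "fmax (Eq s t) = max (tmax s) (tmax t)"
| "fmax Bot = 0"
| "fmax (Imp p q) = max (fmax p) (fmax q)"
| "fmax (All x p) = max x (fmax p)"

fun tsubst :: "nat \<Rightarrow> trm \<Rightarrow> trm \<Rightarrow> trm" where
  "tsubst x t (Var y) = (if x = y then t else Var y)"
| "tsubst x t (Fn f a b) = Fn f (tsubst x t a) (tsubst x t b)"

text \<open>Plain substitution of t for the free occurrences of x (used only when substitutable).\<close>
fun subst :: "nat \<Rightarrow> trm \<Rightarrow> form \<Rightarrow> form" where
  "subst x t (Eq a b) = Eq (tsubst x t a) (tsubst x t b)"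
| "subst x t Bot = Bot"
| "subst x t (Imp p q) = Imp (subst x t p) (subst x t q)"
| "subst x t (All y p) = (if x = y then All y p else All y (subst x t p))"

fun substitutable :: "nat \<Rightarrow> trm \<Rightarrow> form \<Rightarrow> bool" where
  "substitutable x t (Eq a b) = True"
| "substitutable x t Bot = True"
| "substitutable x t (Imp p q) = (substitutable x t p \<and> substitutable x t q)"
| "substitutable x t (All y p) =
     (x \<notin> fv (All y p) \<or> (y \<notin> tvars t \<and> substitutable x t p))"

definition close :: "form \<Rightarrow> form" where
  "close p = foldr All (sorted_list_of_set (fv p)) p"

inductive logax :: "form \<Rightarrow> bool" where
  ax1: "logax (Imp p (Imp q p))"
| ax2: "logax (Imp (Imp p (Imp q r)) (Imp (Imp p q) (Imp p r)))"
| ax3: "logax (Imp (Neg (Neg p)) p)"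
| q1: "substitutable x t p \<Longrightarrow> logax (Imp (All x p) (subst x t p))"
| q2: "x \<notin> fv p \<Longrightarrow> logax (Imp p (All x p))"
| q3: "logax (Imp (All x (Imp p q)) (Imp (All x p) (All x q)))"
| eq_refl: "logax (Eq (Var x) (Var x))"
| eq_atom: "logax (Imp (Eq (Var x) (Var y)) (Imp (Eq (Var x) (Var z)) (Eq (Var y) (Var z))))"
| eq_fn: "logax (Imp (Eq (Var x1) (Var y1)) (Imp (Eq (Var x2) (Var y2))
            (Eq (Fn f (Var x1) (Var x2)) (Fn f (Var y1) (Var y2)))))"
| gen: "logax p \<Longrightarrow> logax (All x p)"

inductive prov :: "form set \<Rightarrow> form \<Rightarrow> bool" (infix "\<turnstile>" 55) where
  hyp: "p \<in> \<Gamma> \<Longrightarrow> \<Gamma> \<turnstile> p"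
| lax: "logax p \<Longrightarrow> \<Gamma> \<turnstile> p"
| mp: "\<Gamma> \<turnstile> Imp p q \<Longrightarrow> \<Gamma> \<turnstile> p \<Longrightarrow> \<Gamma> \<turnstile> q"

section \<open>Peano axioms P(p,m) with 0, 1 defined as identity elements\<close>

definition opp :: "fsym \<Rightarrow> trm \<Rightarrow> trm \<Rightarrow> trm" where "opp f a b = Fn f a b"

definition ZERO :: "fsym \<Rightarrow> nat \<Rightarrow> form" where
  "ZERO p v = All (Suc v) (And (Eq (Fn p (Var (Suc v)) (Var v)) (Var (Suc v)))
                               (Eq (Fn p (Var v) (Var (Suc v))) (Var (Suc v))))"

text \<open>SUCC p m w y: w = y + 1, i.e. exists o, o is the identity of m and w = y p o.\<close>
definition SUCC :: "fsym \<Rightarrow> fsym \<Rightarrow> nat \<Rightarrow> nat \<Rightarrow> form" where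
  "SUCC p m w y = (let o' = Suc (max w y) in
      Ex o' (And (ZERO m o') (Eq (Var w) (Fn p (Var y) (Var o')))))"

definition PA_basic :: "fsym \<Rightarrow> fsym \<Rightarrow> form set" where
  "PA_basic p m = {
     Ex 0 (ZERO p 0),
     Ex 0 (ZERO m 0),
     All 0 (All 1 (Imp (ZERO p 0) (Imp (ZERO m 1)
        (All 2 (Neg (Eq (Fn p (Var 2) (Var 1)) (Var 0))))))),
     All 1 (Imp (ZERO m 1) (All 2 (All 3
        (Imp (Eq (Fn p (Var 2) (Var 1)) (Fn p (Var 3) (Var 1))) (Eq (Var 2) (Var 3)))))),
     All 1 (Imp (ZERO m 1) (All 2 (All 3
        (Eq (Fn p (Var 2) (Fn p (Var 3) (Var 1))) (Fn p (Fn p (Var 2) (Var 3)) (Var 1)))))),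
     All 0 (Imp (ZERO p 0) (All 2 (Eq (Fn m (Var 2) (Var 0)) (Var 0)))),
     All 1 (Imp (ZERO m 1) (All 2 (All 3
        (Eq (Fn m (Var 2) (Fn p (Var 3) (Var 1))) (Fn p (Fn m (Var 2) (Var 3)) (Var 2))))))
   }"

text \<open>Induction instance for formula phi (of the full vocabulary) in variable y, parameters
  universally closed:  ((phi(0) and forall y (phi(y) -> phi(y+1))) -> forall y phi(y)).
  phi(0) is rendered as forall y (ZERO y -> phi), and phi(y+1) as
  forall w (w = y+1 -> forall y (y = w -> phi)) with w fresh.\<close>
definition IND :: "fsym \<Rightarrow> fsym \<Rightarrow> form \<Rightarrow> nat \<Rightarrow> form" where
  "IND p m phi y = (let w = Suc (max y (fmax phi)) in
     close (Imp (And (All y (Imp (ZERO p y) phi))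
                     (All y (Imp phi (All w (Imp (SUCC p m w y)
                                                 (All y (Imp (Eq (Var y) (Var w)) phi)))))))
                (All y phi)))"

text \<open>P(p, m, L) where L is the other pair of symbols: induction for all formulas of the
  full four-symbol vocabulary.\<close>
definition PA :: "fsym \<Rightarrow> fsym \<Rightarrow> form set" where
  "PA p m = PA_basic p m \<union> {IND p m phi y | phi y. True}"

section \<open>The sentence ISOM for a formula theta(u,v) with u = Var 0, v = Var 1\<close>

text \<open>theta(t1,t2) for terms t1,t2 not containing variables 0,1.\<close>
definition inst :: "form \<Rightarrow> trm \<Rightarrow> trm \<Rightarrow> form" where
  "inst th t1 t2 = All 0 (All 1 (Imp (And (Eq (Var 0) t1) (Eq (Var 1) t2)) th))"

definition TOTAL :: "form \<Rightarrow> form" where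
  "TOTAL th = All 2 (Ex 3 (And (inst th (Var 2) (Var 3))
                          (All 4 (Imp (inst th (Var 2) (Var 4)) (Eq (Var 4) (Var 3))))))"

definition ONTO :: "form \<Rightarrow> form" where
  "ONTO th = All 3 (Ex 2 (inst th (Var 2) (Var 3)))"

definition INJ :: "form \<Rightarrow> form" where
  "INJ th = All 2 (All 4 (All 3 (Imp (And (inst th (Var 2) (Var 3)) (inst th (Var 4) (Var 3)))
                                 (Eq (Var 2) (Var 4)))))"

definition HOM :: "fsym \<Rightarrow> fsym \<Rightarrow> form \<Rightarrow> form" where
  "HOM f g th = All 2 (All 3 (All 4 (All 5
      (Imp (And (inst th (Var 2) (Var 4)) (inst th (Var 3) (Var 5)))
           (inst th (Fn f (Var 2) (Var 3)) (Fn g (Var 4) (Var 5)))))))"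

definition ISOM :: "form \<Rightarrow> form" where
  "ISOM th = And (TOTAL th) (And (ONTO th) (And (INJ th)
               (And (HOM Plus Plus' th) (HOM Times Times' th))))"

end

theory Submission
  imports Defs "HOL-Library.Countable"
begin


instance fsym :: countable by countable_datatype
instance trm :: countable by countable_datatype
instance form :: countable by countable_datatype

section \<open>Semantics\<close>

fun evalt :: "(fsym \<Rightarrow> 'a \<Rightarrow> 'a \<Rightarrow> 'a) \<Rightarrow> (nat \<Rightarrow> 'a) \<Rightarrow> trm \<Rightarrow> 'a" where
  "evalt F e (Var x) = e x"
| "evalt F e (Fn f s t) = F f (evalt F e s) (evalt F e t)"

fun eval :: "'a set \<Rightarrow> (fsym \<Rightarrow> 'a \<Rightarrow> 'a \<Rightarrow> 'a) \<Rightarrow> (nat \<Rightarrow> 'a) \<Rightarrow> form \<Rightarrow> bool" where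
  "eval D F e (Eq s t) = (evalt F e s = evalt F e t)"
| "eval D F e Bot = False"
| "eval D F e (Imp p q) = (eval D F e p \<longrightarrow> eval D F e q)"
| "eval D F e (All x p) = (\<forall>a\<in>D. eval D F (e(x:=a)) p)"

lemma evalt_cong: "(\<forall>x\<in>tvars t. e x = e' x) \<Longrightarrow> evalt F e t = evalt F e' t"
  by (induct t) auto

lemma eval_cong: "(\<forall>x\<in>fv p. e x = e' x) \<Longrightarrow> eval D F e p = eval D F e' p"
proof (induct p arbitrary: e e')
  case (Eq s t) then show ?case using evalt_cong[of s e e' F] evalt_cong[of t e e' F] by auto
next
  case (Imp p q)
  have "eval D F e p = eval D F e' p" "eval D F e q = eval D F e' q"
    using Imp(3) by (auto intro!: Imp(1,2))
  then show ?case by simp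
next
  case (All x p)
  have "\<And>a. eval D F (e(x:=a)) p = eval D F (e'(x:=a)) p"
    using All by (intro All(1)) auto
  then show ?case by simp
qed auto

lemma evalt_tsubst: "evalt F e (tsubst x t s) = evalt F (e(x := evalt F e t)) s"
  by (induct s) auto

lemma tsubst_notin: "x \<notin> tvars s \<Longrightarrow> tsubst x t s = s"
proof (induction s)
  case (Fn f a b) then show ?case by simp
qed simp

lemma subst_nofv: "x \<notin> fv p \<Longrightarrow> subst x t p = p"
  by (induct p) (auto simp: tsubst_notin)

lemma tvars_tmax: "y \<in> tvars t \<Longrightarrow> y \<le> tmax t"
  by (induct t) auto

lemma fv_fmax: "y \<in> fv p \<Longrightarrow> y \<le> fmax p"
  by (induct p) (auto dest: tvars_tmax)


lemma eval_subst: "substitutable x t p \<Longrightarrow>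
  eval D F e (subst x t p) = eval D F (e(x := evalt F e t)) p"
proof (induct p arbitrary: e)
  case (Eq a b) then show ?case by (simp only: subst.simps eval.simps evalt_tsubst)
next
  case (All y p)
  show ?case
  proof (cases "x = y")
    case True
    have 1: "subst x t (All y p) = All y p" using True by simp
    have "eval D F (e(x := evalt F e t)) (All y p) = eval D F e (All y p)"
      by (rule eval_cong) (use True in auto)
    then show ?thesis by (subst 1) (rule sym)
  next
    case False
    show ?thesis
    proof (cases "x \<in> fv (All y p)")
      case False': False
      then have "x \<notin> fv p" using False by auto
      then have "subst x t p = p" by (rule subst_nofv)
      then have 1: "subst x t (All y p) = All y p" using False by simp
      have "eval D F e (All y p) = eval D F (e(x := evalt F e t)) (All y p)"
        using False' by (intro eval_cong) auto
      then show ?thesis by (subst 1)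
    next
      case True
      with All(2) False have yt: "y \<notin> tvars t" and sp: "substitutable x t p" by auto
      have ev: "\<And>a. evalt F (e(y:=a)) t = evalt F e t" using yt by (intro evalt_cong) auto
      have eq: "\<And>a. e(y := a, x := evalt F (e(y:=a)) t) = e(x := evalt F e t, y := a)"
        using False by (simp only: ev) (rule fun_upd_twist, auto)
      have "eval D F e (subst x t (All y p)) = (\<forall>a\<in>D. eval D F (e(y:=a)) (subst x t p))"
        using False by simp
      also have "\<dots> = (\<forall>a\<in>D. eval D F (e(y := a, x := evalt F (e(y:=a)) t)) p)"
        by (simp only: All(1)[OF sp])
      also have "\<dots> = (\<forall>a\<in>D. eval D F (e(x := evalt F e t, y := a)) p)"
        by (simp only: eq)
      also have "\<dots> = eval D F (e(x := evalt F e t)) (All y p)"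
        by (simp only: eval.simps)
      finally show ?thesis .
    qed
  qed
qed auto

section \<open>Proof theory\<close>

lemma prov_mono: "\<Gamma> \<turnstile> p \<Longrightarrow> \<Gamma> \<subseteq> \<Delta> \<Longrightarrow> \<Delta> \<turnstile> p"
  by (induct rule: prov.induct) (auto intro: prov.intros)

lemma prov_finite: "\<Gamma> \<turnstile> p \<Longrightarrow> \<exists>\<Delta>. finite \<Delta> \<and> \<Delta> \<subseteq> \<Gamma> \<and> \<Delta> \<turnstile> p"
proof (induct rule: prov.induct)
  case (hyp p \<Gamma>) then show ?case by (intro exI[of _ "{p}"]) (auto intro: prov.hyp)
next
  case (lax p \<Gamma>) then show ?case by (intro exI[of _ "{}"]) (auto intro: prov.lax)
next
  case (mp \<Gamma> p q)
  then obtain A B where "finite A" "A \<subseteq> \<Gamma>" "A \<turnstile> Imp p q" "finite B" "B \<subseteq> \<Gamma>" "B \<turnstile> p" by blast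
  then show ?case
    by (intro exI[of _ "A \<union> B"]) (auto intro: prov.mp prov_mono)
qed

lemma imp_refl: "\<Gamma> \<turnstile> Imp p p"
proof -
  have 1: "\<Gamma> \<turnstile> Imp (Imp p (Imp (Imp p p) p)) (Imp (Imp p (Imp p p)) (Imp p p))"
    by (rule lax, rule ax2)
  have 2: "\<Gamma> \<turnstile> Imp p (Imp (Imp p p) p)" by (rule lax, rule ax1)
  have 3: "\<Gamma> \<turnstile> Imp p (Imp p p)" by (rule lax, rule ax1)
  show ?thesis using mp[OF mp[OF 1 2] 3] .
qed

lemma deduction: "insert A \<Gamma> \<turnstile> B \<Longrightarrow> \<Gamma> \<turnstile> Imp A B"
proof (induct "insert A \<Gamma>" B rule: prov.induct)
  case (hyp p)
  then show ?case
  proof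
    assume "p = A" then show ?thesis using imp_refl by simp
  next
    assume "p \<in> \<Gamma>"
    then show ?thesis using mp[OF lax[OF ax1] prov.hyp] by blast
  qed
next
  case (lax p) then show ?case using mp[OF prov.lax[OF ax1] prov.lax] by blast
next
  case (mp p q)
  show ?case using prov.mp[OF prov.mp[OF lax[OF ax2] mp(2)] mp(4)] .
qed

lemma undeduct: "\<Gamma> \<turnstile> Imp A B \<Longrightarrow> insert A \<Gamma> \<turnstile> B"
  by (rule mp[OF prov_mono[of \<Gamma>]]) (auto intro: hyp)

lemma weaken: "\<Gamma> \<turnstile> p \<Longrightarrow> insert q \<Gamma> \<turnstile> p"
  by (erule prov_mono) auto

lemma dneg: "\<Gamma> \<turnstile> Neg (Neg p) \<Longrightarrow> \<Gamma> \<turnstile> p"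
  by (rule mp[OF lax[OF ax3]])

lemma exfalso: "\<Gamma> \<turnstile> Bot \<Longrightarrow> \<Gamma> \<turnstile> p"
proof -
  assume b: "\<Gamma> \<turnstile> Bot"
  have "\<Gamma> \<turnstile> Imp Bot (Imp (Neg p) Bot)" by (rule lax, rule ax1)
  then have "\<Gamma> \<turnstile> Neg (Neg p)" using mp b unfolding Neg_def by blast
  then show ?thesis by (rule dneg)
qed

lemma negE: "\<Gamma> \<turnstile> Neg p \<Longrightarrow> \<Gamma> \<turnstile> p \<Longrightarrow> \<Gamma> \<turnstile> Bot"
  unfolding Neg_def by (rule mp)

lemma negI: "insert p \<Gamma> \<turnstile> Bot \<Longrightarrow> \<Gamma> \<turnstile> Neg p"
  unfolding Neg_def by (rule deduction)

lemma byContra: "insert (Neg p) \<Gamma> \<turnstile> Bot \<Longrightarrow> \<Gamma> \<turnstile> p"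
  by (rule dneg, rule negI)

lemma hypI: "insert p \<Gamma> \<turnstile> p" by (rule hyp) simp

lemma subst_Neg[simp]: "subst x t (Neg p) = Neg (subst x t p)"
  by (simp add: Neg_def)
lemma fv_Neg[simp]: "fv (Neg p) = fv p" by (simp add: Neg_def)
lemma fmax_Neg[simp]: "fmax (Neg p) = fmax p" by (simp add: Neg_def)
lemma substitutable_Neg[simp]: "substitutable x t (Neg p) = substitutable x t p"
  by (simp add: Neg_def)
lemma eval_Neg[simp]: "eval D F e (Neg p) = (\<not> eval D F e p)" by (simp add: Neg_def)
lemma eval_And[simp]: "eval D F e (And p q) = (eval D F e p \<and> eval D F e q)"
  by (simp add: And_def)
lemma eval_Ex[simp]: "eval D F e (Ex x p) = (\<exists>a\<in>D. eval D F (e(x:=a)) p)"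
  by (simp add: Ex_def)

lemma inst: "\<Gamma> \<turnstile> All x p \<Longrightarrow> substitutable x t p \<Longrightarrow> \<Gamma> \<turnstile> subst x t p"
  by (rule mp[OF lax[OF q1]])

lemma genth: "\<Gamma> \<turnstile> p \<Longrightarrow> (\<forall>q\<in>\<Gamma>. x \<notin> fv q) \<Longrightarrow> \<Gamma> \<turnstile> All x p"
proof (induct rule: prov.induct)
  case (hyp p \<Gamma>)
  then show ?case using mp[OF lax[OF q2] prov.hyp] by blast
next
  case (lax p \<Gamma>) then show ?case by (intro prov.lax gen)
next
  case (mp \<Gamma> p q)
  then show ?case using prov.mp[OF prov.mp[OF lax[OF q3]]] by blast
qed

section \<open>Equality\<close>

lemma tvars_gt: "tmax t < y \<Longrightarrow> y \<notin> tvars t"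
  using tvars_tmax by fastforce

lemma E_refl: "\<Gamma> \<turnstile> Eq t t"
proof -
  have "\<Gamma> \<turnstile> All 0 (Eq (Var 0) (Var 0))" by (intro lax gen eq_refl)
  from inst[OF this, of t] show ?thesis by simp
qed

lemma E_atom: assumes "\<Gamma> \<turnstile> Eq s t" "\<Gamma> \<turnstile> Eq s u" shows "\<Gamma> \<turnstile> Eq t u"
proof -
  define N where "N = Suc (max (tmax s) (max (tmax t) (tmax u)))"
  have a: "\<Gamma> \<turnstile> All N (All (N+1) (All (N+2) (Imp (Eq (Var N) (Var (N+1)))
     (Imp (Eq (Var N) (Var (N+2))) (Eq (Var (N+1)) (Var (N+2)))))))"
    by (intro lax gen eq_atom)
  have ns: "N+1 \<notin> tvars s" "N+2 \<notin> tvars s" "N+2 \<notin> tvars t"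
    by (auto simp: N_def dest!: tvars_tmax)
  have b: "\<Gamma> \<turnstile> All (N+1) (All (N+2) (Imp (Eq s (Var (N+1)))
     (Imp (Eq s (Var (N+2))) (Eq (Var (N+1)) (Var (N+2))))))"
    using inst[OF a, of s] ns by simp
  have c: "\<Gamma> \<turnstile> All (N+2) (Imp (Eq s t) (Imp (Eq s (Var (N+2))) (Eq t (Var (N+2)))))"
    using inst[OF b, of t] ns by (simp add: tsubst_notin)
  have d: "\<Gamma> \<turnstile> Imp (Eq s t) (Imp (Eq s u) (Eq t u))"
    using inst[OF c, of u] ns by (simp add: tsubst_notin)
  show ?thesis using mp[OF mp[OF d assms(1)] assms(2)] .
qed

lemma E_sym: "\<Gamma> \<turnstile> Eq s t \<Longrightarrow> \<Gamma> \<turnstile> Eq t s"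
  using E_atom E_refl by blast

lemma E_trans: "\<Gamma> \<turnstile> Eq s t \<Longrightarrow> \<Gamma> \<turnstile> Eq t u \<Longrightarrow> \<Gamma> \<turnstile> Eq s u"
  using E_atom E_sym by blast

lemma E_fn: assumes "\<Gamma> \<turnstile> Eq s1 t1" "\<Gamma> \<turnstile> Eq s2 t2"
  shows "\<Gamma> \<turnstile> Eq (Fn f s1 s2) (Fn f t1 t2)"
proof -
  define N where "N = Suc (max (max (tmax s1) (tmax s2)) (max (tmax t1) (tmax t2)))"
  have a: "\<Gamma> \<turnstile> All N (All (N+1) (All (N+2) (All (N+3) (Imp (Eq (Var N) (Var (N+1)))
     (Imp (Eq (Var (N+2)) (Var (N+3)))
     (Eq (Fn f (Var N) (Var (N+2))) (Fn f (Var (N+1)) (Var (N+3)))))))))"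
    by (intro lax gen eq_fn)
  have ns: "N+1 \<notin> tvars s1" "N+2 \<notin> tvars s1" "N+3 \<notin> tvars s1"
     "N+2 \<notin> tvars t1" "N+3 \<notin> tvars t1" "N+3 \<notin> tvars s2"
    by (auto simp: N_def dest!: tvars_tmax)
  have b1: "\<Gamma> \<turnstile> All (N+1) (All (N+2) (All (N+3) (Imp (Eq s1 (Var (N+1)))
     (Imp (Eq (Var (N+2)) (Var (N+3)))
     (Eq (Fn f s1 (Var (N+2))) (Fn f (Var (N+1)) (Var (N+3))))))))"
    using inst[OF a, of s1] ns by (simp add: tsubst_notin)
  have b2: "\<Gamma> \<turnstile> All (N+2) (All (N+3) (Imp (Eq s1 t1)
     (Imp (Eq (Var (N+2)) (Var (N+3)))
     (Eq (Fn f s1 (Var (N+2))) (Fn f t1 (Var (N+3)))))))"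
    using inst[OF b1, of t1] ns by (simp add: tsubst_notin)
  have b3: "\<Gamma> \<turnstile> All (N+3) (Imp (Eq s1 t1)
     (Imp (Eq s2 (Var (N+3)))
     (Eq (Fn f s1 s2) (Fn f t1 (Var (N+3))))))"
    using inst[OF b2, of s2] ns by (simp add: tsubst_notin)
  have b: "\<Gamma> \<turnstile> Imp (Eq s1 t1) (Imp (Eq s2 t2) (Eq (Fn f s1 s2) (Fn f t1 t2)))"
    using inst[OF b3, of t2] ns by (simp add: tsubst_notin)
  show ?thesis using mp[OF mp[OF b assms(1)] assms(2)] .
qed



definition cons :: "form set \<Rightarrow> bool" where "cons \<Gamma> \<longleftrightarrow> \<not> \<Gamma> \<turnstile> Bot"

lemma cons_anti: "cons B \<Longrightarrow> A \<subseteq> B \<Longrightarrow> cons A"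
  unfolding cons_def using prov_mono by blast

lemma subst_fresh_substitutable: "fmax p < c \<Longrightarrow> substitutable x (Var c) p"
  by (induct p) auto

lemma tvars_tsubst_var: "tvars (tsubst x (Var c) a) \<subseteq> (tvars a - {x}) \<union> {c}"
  by (induct a) auto

lemma fv_subst_var: "fv (subst x (Var c) p) \<subseteq> (fv p - {x}) \<union> {c}"
proof (induct p)
  case (Eq a b) then show ?case using tvars_tsubst_var[of x c a] tvars_tsubst_var[of x c b] by auto
qed auto

lemma tsubst_back: "tmax a < c \<Longrightarrow> tsubst c (Var x) (tsubst x (Var c) a) = a"
  by (induct a) auto

lemma subst_back: "fmax p < c \<Longrightarrow> subst c (Var x) (subst x (Var c) p) = p"
proof (induct p)
  case (Eq a b) then show ?case by (simp add: tsubst_back)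
next
  case (All y q)
  show ?case
  proof (cases "x = y")
    case True
    have "c \<notin> fv q" using All(2) fv_fmax by fastforce
    then show ?thesis using True All(2) by (simp add: subst_nofv)
  next
    case False then show ?thesis using All by simp
  qed
qed auto

lemma substitutable_back: "fmax p < c \<Longrightarrow> substitutable c (Var x) (subst x (Var c) p)"
proof (induct p)
  case (All y q)
  show ?case
  proof (cases "x = y")
    case True
    have "c \<notin> fv q" using All(2) fv_fmax by fastforce
    then show ?thesis using True by simp
  next
    case False then show ?thesis using All by simp
  qed
qed auto

lemma gen_const:
  assumes d: "\<Gamma> \<turnstile> subst x (Var c) p" and nf: "\<forall>q\<in>\<Gamma>. c \<notin> fv q" and c: "fmax p < c"
  shows "\<Gamma> \<turnstile> All x p"
proof -
  define q where "q = subst x (Var c) p"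
  have 1: "\<Gamma> \<turnstile> All c q" using genth[OF d[folded q_def] nf] .
  have "logax (Imp (All c q) (subst c (Var x) q))"
    unfolding q_def by (rule q1, rule substitutable_back[OF c])
  then have "logax (Imp (All c q) p)" unfolding q_def using subst_back[OF c] by simp
  then have 2: "\<Gamma> \<turnstile> All x (Imp (All c q) p)" by (intro lax gen)
  have "x \<notin> fv (All c q)" using fv_subst_var[of x c p] unfolding q_def by auto
  then have 3: "\<Gamma> \<turnstile> Imp (All c q) (All x (All c q))" by (intro lax q2)
  have 4: "\<Gamma> \<turnstile> All x (All c q)" using mp[OF 3 1] .
  show ?thesis using mp[OF mp[OF lax[OF q3] 2] 4] .
qed

definition henk :: "nat \<Rightarrow> form \<Rightarrow> nat \<Rightarrow> form" where
  "henk x p c = Imp (Neg (All x p)) (Neg (subst x (Var c) p))"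

lemma henkin_cons:
  assumes cD: "cons \<Delta>" and nf: "\<forall>q\<in>\<Delta>. c \<notin> fv q" and c: "fmax (All x p) < c"
  shows "cons (insert (henk x p c) \<Delta>)"
proof (rule ccontr)
  assume "\<not> cons (insert (henk x p c) \<Delta>)"
  then have "insert (henk x p c) \<Delta> \<turnstile> Bot" unfolding cons_def by simp
  then have nh: "\<Delta> \<turnstile> Neg (henk x p c)" by (rule negI)
  have "insert (Neg (subst x (Var c) p)) \<Delta> \<turnstile> henk x p c"
    unfolding henk_def by (rule mp[OF lax[OF ax1] hypI])
  then have "insert (Neg (subst x (Var c) p)) \<Delta> \<turnstile> Bot"
    using negE[OF weaken[OF nh]] by blast
  then have "\<Delta> \<turnstile> subst x (Var c) p" by (rule byContra)
  then have a: "\<Delta> \<turnstile> All x p" using gen_const nf c by auto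
  have "insert (Neg (All x p)) \<Delta> \<turnstile> Neg (subst x (Var c) p)"
    by (rule exfalso, rule negE[OF hypI weaken[OF a]])
  then have "\<Delta> \<turnstile> henk x p c" unfolding henk_def by (rule deduction)
  then have "\<Delta> \<turnstile> Bot" using negE[OF nh] by blast
  then show False using cD unfolding cons_def by simp
qed

definition fresh :: "form list \<Rightarrow> form \<Rightarrow> nat \<Rightarrow> nat" where
  "fresh As p n = Suc (max n (max (fmax p) (foldr (\<lambda>q m. max (fmax q) m) As 0)))"

lemma foldr_max_ge: "q \<in> set As \<Longrightarrow> fmax q \<le> foldr (\<lambda>q m. max (fmax q) m) As 0"
  by (induct As) auto

lemma fresh_gt: "n < fresh As p n" "fmax p < fresh As p n"
  "q \<in> set As \<Longrightarrow> fmax q < fresh As p n"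
  unfolding fresh_def using foldr_max_ge[of q As] by auto

primrec Hs :: "form list \<Rightarrow> nat \<Rightarrow> form list" where
  "Hs S 0 = S"
| "Hs S (Suc n) = (case (from_nat (fst (prod_decode n)) :: form) of
      All x p \<Rightarrow> henk x p (fresh (Hs S n) (All x p) n) # Hs S n
    | _ \<Rightarrow> Hs S n)"

lemma Hs_Suc_mono: "set (Hs S n) \<subseteq> set (Hs S (Suc n))"
  by (auto split: form.splits)

lemma Hs_mono: "m \<le> n \<Longrightarrow> set (Hs S m) \<subseteq> set (Hs S n)"
proof (induct n)
  case (Suc n) then show ?case by (metis Hs_Suc_mono le_SucE order_trans order_refl)
qed simp

lemma Hs_henk: "from_nat (fst (prod_decode n)) = All x p \<Longrightarrow>
   henk x p (fresh (Hs S n) (All x p) n) \<in> set (Hs S (Suc n))"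
  by simp

lemma Hs_cons:
  assumes c0: "cons (\<Gamma>0 \<union> set S)" and cl: "\<forall>q\<in>\<Gamma>0. fv q = {}"
  shows "cons (\<Gamma>0 \<union> set (Hs S n))"
proof (induct n)
  case 0 then show ?case using c0 by simp
next
  case (Suc n)
  show ?case
  proof (cases "from_nat (fst (prod_decode n)) :: form")
    case (All x p)
    let ?c = "fresh (Hs S n) (All x p) n"
    have nf: "\<forall>q\<in>\<Gamma>0 \<union> set (Hs S n). ?c \<notin> fv q"
      using cl fresh_gt(3)[of _ "Hs S n" "All x p" n] fv_fmax by fastforce
    have "cons (insert (henk x p ?c) (\<Gamma>0 \<union> set (Hs S n)))"
      by (rule henkin_cons[OF Suc nf fresh_gt(2)])
    then show ?thesis using All by simp
  qed (use Suc in simp_all)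
qed

lemma chain_finite:
  fixes A :: "nat \<Rightarrow> 'a set"
  assumes amono: "\<And>m n. m \<le> n \<Longrightarrow> A m \<subseteq> A n" and fin: "finite \<Delta>"
  shows "\<Delta> \<subseteq> (\<Union>n. A n) \<Longrightarrow> \<exists>N. \<Delta> \<subseteq> A N"
  using fin
proof (induct \<Delta>)
  case empty then show ?case by simp
next
  case (insert x F)
  then obtain N where N: "F \<subseteq> A N" by auto
  obtain M where M: "x \<in> A M" using insert by auto
  have "A N \<subseteq> A (max N M)" by (rule amono) simp
  moreover have "A M \<subseteq> A (max N M)" by (rule amono) simp
  ultimately
  have "insert x F \<subseteq> A (max N M)" using N M by blast
  then show ?case by blast
qed

lemma chain_cons:
  fixes A :: "nat \<Rightarrow> form set"
  assumes amono: "\<And>m n. m \<le> n \<Longrightarrow> A m \<subseteq> A n" and c: "\<And>n. cons (A n)"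
  shows "cons (\<Union>n. A n)"
proof (rule ccontr)
  assume "\<not> cons (\<Union>n. A n)"
  then obtain \<Delta> where "finite \<Delta>" "\<Delta> \<subseteq> (\<Union>n. A n)" "\<Delta> \<turnstile> Bot"
    unfolding cons_def using prov_finite by blast
  then obtain N where "\<Delta> \<subseteq> A N" using chain_finite[of A, OF amono] by blast
  then have "A N \<turnstile> Bot" using \<open>\<Delta> \<turnstile> Bot\<close> prov_mono by blast
  then show False using c unfolding cons_def by blast
qed

primrec Ls :: "form set \<Rightarrow> nat \<Rightarrow> form set" where
  "Ls S 0 = S"
| "Ls S (Suc n) = (if cons (insert (from_nat n) (Ls S n)) then insert (from_nat n) (Ls S n) else Ls S n)"

definition Lind :: "form set \<Rightarrow> form set" where "Lind S = (\<Union>n. Ls S n)"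

lemma Ls_mono: "m \<le> n \<Longrightarrow> Ls S m \<subseteq> Ls S n"
proof (induct n)
  case (Suc n) then show ?case by (auto simp: le_Suc_eq)
qed simp

lemma Ls_cons: "cons S \<Longrightarrow> cons (Ls S n)"
  by (induct n) auto

lemma Lind_cons: "cons S \<Longrightarrow> cons (Lind S)"
  unfolding Lind_def by (rule chain_cons[OF Ls_mono Ls_cons])

lemma Lind_sub: "S \<subseteq> Lind S"
  unfolding Lind_def using Ls.simps(1) by blast

lemma Lind_max: "cons (insert p (Lind S)) \<Longrightarrow> p \<in> Lind S"
proof -
  assume c: "cons (insert p (Lind S))"
  let ?n = "to_nat p"
  have "Ls S ?n \<subseteq> Lind S" unfolding Lind_def by auto
  then have "cons (insert p (Ls S ?n))" by (intro cons_anti[OF c]) auto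
  then have "p \<in> Ls S (Suc ?n)" by simp
  then show ?thesis unfolding Lind_def by blast
qed

locale mcs =
  fixes H :: "form set"
  assumes hcons: "cons H" and hmax: "\<And>p. cons (insert p H) \<Longrightarrow> p \<in> H"
begin

lemma closed: "H \<turnstile> p \<Longrightarrow> p \<in> H"
proof (rule hmax, rule ccontr)
  assume "H \<turnstile> p" "\<not> cons (insert p H)"
  then have "H \<turnstile> Neg p" unfolding cons_def by (intro negI) simp
  then have "H \<turnstile> Bot" using negE \<open>H \<turnstile> p\<close> by blast
  then show False using hcons unfolding cons_def by simp
qed

lemma memH: "p \<in> H \<Longrightarrow> H \<turnstile> p" by (rule hyp)

lemma notin_neg: "p \<notin> H \<Longrightarrow> Neg p \<in> H"
proof -
  assume "p \<notin> H"
  then have "\<not> cons (insert p H)" using hmax by blast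
  then have "H \<turnstile> Neg p" unfolding cons_def by (intro negI) simp
  then show ?thesis by (rule closed)
qed

lemma neg_notin: "Neg p \<in> H \<Longrightarrow> p \<notin> H"
proof
  assume "Neg p \<in> H" "p \<in> H"
  then have "H \<turnstile> Bot" by (rule negE[OF memH memH])
  then show False using hcons unfolding cons_def by simp
qed

lemma neg_iff: "Neg p \<in> H \<longleftrightarrow> p \<notin> H"
  using notin_neg neg_notin by blast

lemma bot_notin: "Bot \<notin> H"
proof
  assume "Bot \<in> H" then have "H \<turnstile> Bot" by (rule memH)
  then show False using hcons unfolding cons_def by simp
qed

lemma imp_iff: "Imp p q \<in> H \<longleftrightarrow> (p \<in> H \<longrightarrow> q \<in> H)"
proof
  assume i: "Imp p q \<in> H"
  show "p \<in> H \<longrightarrow> q \<in> H"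
  proof
    assume "p \<in> H" then show "q \<in> H" by (rule closed[OF mp[OF memH[OF i] memH]])
  qed
next
  assume a: "p \<in> H \<longrightarrow> q \<in> H"
  show "Imp p q \<in> H"
  proof (cases "p \<in> H")
    case True
    then have "H \<turnstile> q" using a memH by blast
    then show ?thesis by (rule closed[OF mp[OF lax[OF ax1]]])
  next
    case False
    then have "Neg p \<in> H" by (rule notin_neg)
    then have "insert p H \<turnstile> q" by (rule exfalso[OF negE[OF weaken[OF memH] hypI]])
    then show ?thesis by (intro closed deduction)
  qed
qed

definition cls :: "trm \<Rightarrow> trm set" where "cls t = {s. Eq t s \<in> H}"

lemma cls_eq: "cls s = cls t \<longleftrightarrow> Eq s t \<in> H"
proof
  assume "cls s = cls t"
  moreover have "t \<in> cls t" unfolding cls_def using E_refl closed by blast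
  ultimately show "Eq s t \<in> H" unfolding cls_def by blast
next
  assume "Eq s t \<in> H"
  then have st: "H \<turnstile> Eq s t" by (rule memH)
  show "cls s = cls t"
  proof (rule set_eqI)
    fix u
    have "Eq s u \<in> H \<Longrightarrow> Eq t u \<in> H" by (rule closed[OF E_atom[OF st memH]])
    moreover have "Eq t u \<in> H \<Longrightarrow> Eq s u \<in> H" by (rule closed[OF E_trans[OF st memH]])
    ultimately show "u \<in> cls s \<longleftrightarrow> u \<in> cls t" unfolding cls_def by blast
  qed
qed

definition DM :: "trm set set" where "DM = range cls"

definition FM :: "fsym \<Rightarrow> trm set \<Rightarrow> trm set \<Rightarrow> trm set" where
  "FM f A B = cls (Fn f (SOME s. A = cls s) (SOME t. B = cls t))"

lemma FM_cls: "FM f (cls s) (cls t) = cls (Fn f s t)"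
proof -
  let ?s = "SOME s'. cls s = cls s'" and ?t = "SOME t'. cls t = cls t'"
  have "cls s = cls ?s" "cls t = cls ?t" by (rule someI, rule refl)+
  then have "Eq ?s s \<in> H" "Eq ?t t \<in> H" using cls_eq by metis+
  then have "H \<turnstile> Eq (Fn f ?s ?t) (Fn f s t)" by (intro E_fn memH)
  then have "cls (Fn f ?s ?t) = cls (Fn f s t)" using cls_eq closed by simp
  then show ?thesis unfolding FM_def by simp
qed

lemma FM_closed: "FM f a b \<in> DM" unfolding DM_def FM_def by auto

definition e0 :: "nat \<Rightarrow> trm set" where "e0 x = cls (Var x)"

lemma evalt_e0: "evalt FM e0 t = cls t"
  by (induct t) (auto simp: e0_def FM_cls)

fun fsize :: "form \<Rightarrow> nat" where
  "fsize (Eq s t) = 0" | "fsize Bot = 0" | "fsize (Imp p q) = Suc (fsize p + fsize q)"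
| "fsize (All x p) = Suc (fsize p)"

lemma fsize_subst[simp]: "fsize (subst x t p) = fsize p"
  by (induct p) auto

end

locale henkin_mcs = mcs +
  assumes wit: "\<And>t N. \<exists>c>N. Eq t (Var c) \<in> H"
  and henkin: "\<And>x p. Neg (All x p) \<in> H \<Longrightarrow> \<exists>c. fmax (All x p) < c \<and> Neg (subst x (Var c) p) \<in> H"
begin

lemma es: "fmax q < c \<Longrightarrow>
  eval DM FM e0 (subst x (Var c) q) = eval DM FM (e0(x := cls (Var c))) q"
proof -
  assume "fmax q < c"
  then have "eval DM FM e0 (subst x (Var c) q) = eval DM FM (e0(x := evalt FM e0 (Var c))) q"
    by (intro eval_subst subst_fresh_substitutable)
  then show ?thesis by (simp only: evalt_e0)
qed

lemma truth: "eval DM FM e0 p \<longleftrightarrow> p \<in> H"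
proof (induct "fsize p" arbitrary: p rule: less_induct)
  case less
  have IH: "\<And>r. fsize r < fsize p \<Longrightarrow> eval DM FM e0 r \<longleftrightarrow> r \<in> H" using less by blast
  show ?case
  proof (cases p)
    case (Eq s t) then show ?thesis by (simp add: evalt_e0 cls_eq)
  next
    case Bot then show ?thesis using bot_notin by simp
  next
    case (Imp q r)
    have "fsize q < fsize p" "fsize r < fsize p" using Imp by simp_all
    then have "eval DM FM e0 q \<longleftrightarrow> q \<in> H" "eval DM FM e0 r \<longleftrightarrow> r \<in> H" using IH by blast+
    then show ?thesis unfolding Imp eval.simps imp_iff by blast
  next
    case (All x q)
    have sz: "\<And>c. fsize (subst x (Var c) q) < fsize p" using All by simp
    show ?thesis
    proof
      assume ev: "eval DM FM e0 p"
      show "p \<in> H"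
      proof (rule ccontr)
        assume "p \<notin> H"
        then have "Neg (All x q) \<in> H" using All notin_neg by simp
        then obtain c where c: "fmax (All x q) < c" "Neg (subst x (Var c) q) \<in> H"
          using henkin by blast
        then have "subst x (Var c) q \<notin> H" using neg_notin by blast
        then have "\<not> eval DM FM e0 (subst x (Var c) q)" using IH[OF sz] by blast
        moreover have "fmax q < c" using c(1) by simp
        ultimately have "\<not> eval DM FM (e0(x := cls (Var c))) q" using es by blast
        moreover have "cls (Var c) \<in> DM" unfolding DM_def by simp
        moreover have "\<forall>a\<in>DM. eval DM FM (e0(x := a)) q" using ev unfolding All by simp
        ultimately show False by blast
      qed
    next
      assume pH: "p \<in> H"
      show "eval DM FM e0 p"
        unfolding All eval.simps
      proof
        fix a assume "a \<in> DM"
        then obtain t where t: "a = cls t" unfolding DM_def by auto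
        obtain c where c: "fmax (All x q) < c" "Eq t (Var c) \<in> H" using wit by blast
        have a: "a = cls (Var c)" using t c(2) cls_eq by simp
        have fq: "fmax q < c" using c(1) by simp
        have "H \<turnstile> subst x (Var c) q"
          by (rule inst[OF memH[OF pH[unfolded All]] subst_fresh_substitutable[OF fq]])
        then have "subst x (Var c) q \<in> H" by (rule closed)
        then have "eval DM FM e0 (subst x (Var c) q)" using IH[OF sz] by blast
        then show "eval DM FM (e0(x := a)) q" using es[OF fq] a by simp
      qed
    qed
  qed
qed

end

theorem completeness:
  assumes cl: "\<forall>q\<in>\<Gamma>. fv q = {}"
  and sem: "\<And>(D::trm set set) F e. (\<forall>f. \<forall>a\<in>D. \<forall>b\<in>D. F f a b \<in> D) \<Longrightarrow> (\<forall>n. e n \<in> D) \<Longrightarrow>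
      (\<forall>q\<in>\<Gamma>. eval D F e q) \<Longrightarrow> eval D F e \<phi>"
  shows "\<Gamma> \<turnstile> \<phi>"
proof (rule ccontr)
  assume np: "\<not> \<Gamma> \<turnstile> \<phi>"
  define S where "S = [Neg \<phi>]"
  have c0: "cons (\<Gamma> \<union> set S)"
    using byContra np unfolding cons_def S_def by auto
  define A where "A n = \<Gamma> \<union> set (Hs S n)" for n
  have Amono: "\<And>m n. m \<le> n \<Longrightarrow> A m \<subseteq> A n" unfolding A_def using Hs_mono by blast
  have Acons: "\<And>n. cons (A n)" unfolding A_def by (rule Hs_cons[OF c0 cl])
  define H where "H = Lind (\<Union>n. A n)"
  have cH: "cons H" unfolding H_def by (intro Lind_cons chain_cons[OF Amono Acons])
  have AH: "\<And>n. A n \<subseteq> H" unfolding H_def using Lind_sub by blast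
  interpret mcs H
    by unfold_locales (use cH in simp, unfold H_def, rule Lind_max)
  have henkH: "\<And>n x p. from_nat (fst (prod_decode n)) = All x p \<Longrightarrow>
    henk x p (fresh (Hs S n) (All x p) n) \<in> H"
    using AH unfolding A_def using Hs_henk by blast
  interpret henkin_mcs H
  proof
    fix t N
    define y where "y = Suc (tmax t)"
    define \<psi> where "\<psi> = All y (Neg (Eq (Var y) t))"
    define n where "n = prod_encode (to_nat \<psi>, N)"
    define c where "c = fresh (Hs S n) \<psi> n"
    have yt: "y \<notin> tvars t" unfolding y_def using tvars_tmax by fastforce
    have h: "henk y (Neg (Eq (Var y) t)) c \<in> H"
      using henkH[of n y "Neg (Eq (Var y) t)"] unfolding c_def \<psi>_def n_def by simp
    have "insert \<psi> H \<turnstile> subst y t (Neg (Eq (Var y) t))"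
      unfolding \<psi>_def by (rule inst[OF hypI]) simp
    then have "insert \<psi> H \<turnstile> Neg (Eq t t)" using yt by (simp add: tsubst_notin)
    then have "insert \<psi> H \<turnstile> Bot" using negE E_refl by blast
    then have "Neg \<psi> \<in> H" by (intro closed negI)
    then have "Neg (subst y (Var c) (Neg (Eq (Var y) t))) \<in> H"
      using h imp_iff unfolding henk_def \<psi>_def by blast
    then have "Neg (Neg (Eq (Var c) t)) \<in> H" using yt by (simp add: tsubst_notin)
    then have "Eq (Var c) t \<in> H" by (rule closed[OF dneg[OF memH]])
    then have "Eq t (Var c) \<in> H" by (rule closed[OF E_sym[OF memH]])
    moreover have "N < c" unfolding c_def n_def using fresh_gt(1) le_prod_encode_2
      by (metis le_less_trans not_le)
    ultimately show "\<exists>c>N. Eq t (Var c) \<in> H" by blast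
  next
    fix x p
    assume a: "Neg (All x p) \<in> H"
    define n where "n = prod_encode (to_nat (All x p), 0)"
    define c where "c = fresh (Hs S n) (All x p) n"
    have "henk x p c \<in> H" using henkH[of n x p] unfolding c_def n_def by simp
    then have "Neg (subst x (Var c) p) \<in> H" using a imp_iff unfolding henk_def by blast
    moreover have "fmax (All x p) < c" unfolding c_def by (rule fresh_gt(2))
    ultimately show "\<exists>c. fmax (All x p) < c \<and> Neg (subst x (Var c) p) \<in> H" by blast
  qed
  have "\<forall>q\<in>\<Gamma>. eval DM FM e0 q" using truth AH[of 0] unfolding A_def by auto
  moreover have "\<forall>n. e0 n \<in> DM" unfolding e0_def DM_def by simp
  moreover have "\<forall>f. \<forall>a\<in>DM. \<forall>b\<in>DM. FM f a b \<in> DM" using FM_closed by simp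
  ultimately have "eval DM FM e0 \<phi>" using sem by blast
  moreover have "Neg \<phi> \<in> H" using AH[of 0] unfolding A_def S_def by simp
  ultimately show False using truth neg_notin by auto
qed



section \<open>Closedness of the axioms\<close>

lemma finite_tvars: "finite (tvars t)" by (induct t) auto
lemma finite_fv: "finite (fv p)" by (induct p) (auto simp: finite_tvars)

lemma fv_foldr_All: "fv (foldr All xs p) = fv p - set xs"
  by (induct xs) auto

lemma fv_close: "fv (close p) = {}"
  unfolding close_def fv_foldr_All using finite_fv by simp

lemma fv_PA_basic: "q \<in> PA_basic p m \<Longrightarrow> fv q = {}"
  unfolding PA_basic_def ZERO_def And_def Neg_def Ex_def by auto

lemma fv_PA: "q \<in> PA p m \<Longrightarrow> fv q = {}"
  unfolding PA_def IND_def Let_def using fv_PA_basic fv_close by auto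

lemma eval_foldr_All: "(\<forall>n. e n \<in> D) \<Longrightarrow> eval D F e (foldr All xs q) \<Longrightarrow> eval D F e q"
proof (induct xs)
  case (Cons x xs)
  have "\<forall>a\<in>D. eval D F (e(x := a)) (foldr All xs q)" using Cons(3) by simp
  then have "eval D F (e(x := e x)) (foldr All xs q)" using Cons(2) by blast
  then show ?case using Cons by simp
qed simp

lemma eval_close: "(\<forall>n. e n \<in> D) \<Longrightarrow> eval D F e (close q) \<Longrightarrow> eval D F e q"
  unfolding close_def by (rule eval_foldr_All)

section \<open>Models of PA\<close>

definition idf :: "'a set \<Rightarrow> (fsym \<Rightarrow> 'a \<Rightarrow> 'a \<Rightarrow> 'a) \<Rightarrow> fsym \<Rightarrow> 'a \<Rightarrow> bool" where
  "idf D F f z \<longleftrightarrow> (\<forall>a\<in>D. F f a z = a \<and> F f z a = a)"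

lemma eval_ZERO[simp]: "eval D F e (ZERO f v) = idf D F f (e v)"
  by (simp add: ZERO_def idf_def)

locale pa =
  fixes D :: "'a set" and F :: "fsym \<Rightarrow> 'a \<Rightarrow> 'a \<Rightarrow> 'a" and p m :: fsym
  assumes Fcl[simp]: "\<And>f a b. a \<in> D \<Longrightarrow> b \<in> D \<Longrightarrow> F f a b \<in> D"
  and nonempty: "D \<noteq> {}"
  and ax: "\<And>q e. q \<in> PA p m \<Longrightarrow> (\<forall>n. e n \<in> D) \<Longrightarrow> eval D F e q"
begin

lemma axb: "q \<in> PA_basic p m \<Longrightarrow> (\<forall>n. e n \<in> D) \<Longrightarrow> eval D F e q"
  by (rule ax) (auto simp: PA_def)

lemma ex_id: "\<exists>z\<in>D. idf D F p z" "\<exists>z\<in>D. idf D F m z"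
proof -
  obtain a where a: "a \<in> D" using nonempty by blast
  have "eval D F (\<lambda>_. a) (Ex 0 (ZERO p 0))"
    using a by (intro axb) (auto simp: PA_basic_def)
  moreover have "eval D F (\<lambda>_. a) (Ex 0 (ZERO m 0))"
    using a by (intro axb) (auto simp: PA_basic_def)
  ultimately show "\<exists>z\<in>D. idf D F p z" "\<exists>z\<in>D. idf D F m z" by auto
qed

definition zro where "zro = (SOME z. z \<in> D \<and> idf D F p z)"
definition one1 where "one1 = (SOME z. z \<in> D \<and> idf D F m z)"

lemma zro: "zro \<in> D" "idf D F p zro"
  using someI_ex[of "\<lambda>z. z \<in> D \<and> idf D F p z"] ex_id(1) unfolding zro_def by auto
lemma one1: "one1 \<in> D" "idf D F m one1"
  using someI_ex[of "\<lambda>z. z \<in> D \<and> idf D F m z"] ex_id(2) unfolding one1_def by auto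

lemma ZD[simp]: "zro \<in> D" and OD[simp]: "one1 \<in> D" using zro one1 by auto

lemma idf_unique: "z \<in> D \<Longrightarrow> z' \<in> D \<Longrightarrow> idf D F f z \<Longrightarrow> idf D F f z' \<Longrightarrow> z = z'"
  unfolding idf_def by metis

lemma idp_iff[simp]: "z \<in> D \<Longrightarrow> idf D F p z \<longleftrightarrow> z = zro"
  using idf_unique zro by blast
lemma idm_iff[simp]: "z \<in> D \<Longrightarrow> idf D F m z \<longleftrightarrow> z = one1"
  using idf_unique one1 by blast

abbreviation pl (infixl "\<oplus>" 65) where "a \<oplus> b \<equiv> F p a b"
abbreviation ml (infixl "\<otimes>" 70) where "a \<otimes> b \<equiv> F m a b"
abbreviation S where "S a \<equiv> a \<oplus> one1"

lemma add0[simp]: "a \<in> D \<Longrightarrow> a \<oplus> zro = a" "a \<in> D \<Longrightarrow> zro \<oplus> a = a"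
  using zro(2) unfolding idf_def by auto
lemma mul1[simp]: "a \<in> D \<Longrightarrow> a \<otimes> one1 = a" "a \<in> D \<Longrightarrow> one1 \<otimes> a = a"
  using one1(2) unfolding idf_def by auto

definition env0 :: "nat \<Rightarrow> 'a" where "env0 = (\<lambda>_. zro)"
lemma env0D: "\<forall>n. env0 n \<in> D" by (simp add: env0_def)

lemma A3: "a \<in> D \<Longrightarrow> S a \<noteq> zro"
proof -
  assume a: "a \<in> D"
  have "eval D F env0 (All 0 (All 1 (Imp (ZERO p 0) (Imp (ZERO m 1)
        (All 2 (Neg (Eq (Fn p (Var 2) (Var 1)) (Var 0))))))))"
    by (rule axb[OF _ env0D]) (simp add: PA_basic_def)
  then show ?thesis using a by simp
qed

lemma A4: "a \<in> D \<Longrightarrow> b \<in> D \<Longrightarrow> S a = S b \<Longrightarrow> a = b"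
proof -
  assume ab: "a \<in> D" "b \<in> D" "S a = S b"
  have "eval D F env0 (All 1 (Imp (ZERO m 1) (All 2 (All 3
        (Imp (Eq (Fn p (Var 2) (Var 1)) (Fn p (Var 3) (Var 1))) (Eq (Var 2) (Var 3)))))))"
    by (rule axb[OF _ env0D]) (simp add: PA_basic_def)
  then show ?thesis using ab by simp
qed

lemma A4_iff[simp]: "a \<in> D \<Longrightarrow> b \<in> D \<Longrightarrow> S a = S b \<longleftrightarrow> a = b"
  using A4 by blast

lemma A5: "a \<in> D \<Longrightarrow> b \<in> D \<Longrightarrow> a \<oplus> (S b) = S (a \<oplus> b)"
proof -
  assume ab: "a \<in> D" "b \<in> D"
  have "eval D F env0 (All 1 (Imp (ZERO m 1) (All 2 (All 3
        (Eq (Fn p (Var 2) (Fn p (Var 3) (Var 1))) (Fn p (Fn p (Var 2) (Var 3)) (Var 1)))))))"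
    by (rule axb[OF _ env0D]) (simp add: PA_basic_def)
  then show ?thesis using ab by simp
qed

lemma A6[simp]: "a \<in> D \<Longrightarrow> a \<otimes> zro = zro"
proof -
  assume a: "a \<in> D"
  have "eval D F env0 (All 0 (Imp (ZERO p 0) (All 2 (Eq (Fn m (Var 2) (Var 0)) (Var 0)))))"
    by (rule axb[OF _ env0D]) (simp add: PA_basic_def)
  then show ?thesis using a by simp
qed

lemma A7: "a \<in> D \<Longrightarrow> b \<in> D \<Longrightarrow> a \<otimes> (S b) = a \<otimes> b \<oplus> a"
proof -
  assume ab: "a \<in> D" "b \<in> D"
  have "eval D F env0 (All 1 (Imp (ZERO m 1) (All 2 (All 3
        (Eq (Fn m (Var 2) (Fn p (Var 3) (Var 1))) (Fn p (Fn m (Var 2) (Var 3)) (Var 2)))))))"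
    by (rule axb[OF _ env0D]) (simp add: PA_basic_def)
  then show ?thesis using ab by simp
qed

lemma eval_SUCC: "(\<forall>n. e n \<in> D) \<Longrightarrow> eval D F e (SUCC p m w y) = (e w = S (e y))"
proof -
  assume e: "\<forall>n. e n \<in> D"
  define o' where "o' = Suc (max w y)"
  have "o' \<noteq> w" "o' \<noteq> y" "w \<noteq> o'" "y \<noteq> o'" unfolding o'_def by auto
  then show ?thesis unfolding SUCC_def Let_def o'_def[symmetric] using e by auto
qed

lemma ind_raw:
  assumes e: "\<forall>n. e n \<in> D"
  and base: "eval D F (e(y:=zro)) \<phi>"
  and step: "\<And>a. a \<in> D \<Longrightarrow> eval D F (e(y:=a)) \<phi> \<Longrightarrow> eval D F (e(y:=S a)) \<phi>"
  and a: "a \<in> D"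
  shows "eval D F (e(y:=a)) \<phi>"
proof -
  define w where "w = Suc (max y (fmax \<phi>))"
  have wy: "w \<noteq> y" unfolding w_def by simp
  have wf: "w \<notin> fv \<phi>" unfolding w_def using fv_fmax by fastforce
  have "IND p m \<phi> y \<in> PA p m" unfolding PA_def by blast
  from ax[OF this e] have "eval D F e (close (Imp (And (All y (Imp (ZERO p y) \<phi>))
                     (All y (Imp \<phi> (All w (Imp (SUCC p m w y)
                                                 (All y (Imp (Eq (Var y) (Var w)) \<phi>)))))))
                (All y \<phi>)))"
    unfolding IND_def Let_def w_def .
  from eval_close[OF e this] have I: "eval D F e (Imp (And (All y (Imp (ZERO p y) \<phi>))
                     (All y (Imp \<phi> (All w (Imp (SUCC p m w y)
                                                 (All y (Imp (Eq (Var y) (Var w)) \<phi>)))))))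
                (All y \<phi>))" .
  have b: "eval D F e (All y (Imp (ZERO p y) \<phi>))"
  proof (simp only: eval.simps eval_ZERO, intro ballI impI)
    fix a assume a: "a \<in> D" and "idf D F p ((e(y := a)) y)"
    then have "a = zro" by simp
    then show "eval D F (e(y := a)) \<phi>" using base by simp
  qed
  have s: "eval D F e (All y (Imp \<phi> (All w (Imp (SUCC p m w y)
                                                 (All y (Imp (Eq (Var y) (Var w)) \<phi>))))))"
  proof (simp only: eval.simps, intro ballI impI)
    fix c b d assume c: "c \<in> D" and ev: "eval D F (e(y := c)) \<phi>" and bD: "b \<in> D"
      and sc: "eval D F (e(y := c, w := b)) (SUCC p m w y)" and dD: "d \<in> D"
      and eq: "evalt F (e(y := c, w := b, y := d)) (Var y) = evalt F (e(y := c, w := b, y := d)) (Var w)"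
    have envD: "\<forall>n. (e(y := c, w := b)) n \<in> D" using e c bD by simp
    have "(e(y := c, w := b)) w = S ((e(y := c, w := b)) y)"
      using eval_SUCC[OF envD, of w y] sc by blast
    then have b: "b = S c" using wy by simp
    have d: "d = b" using eq wy by simp
    have "eval D F (e(y := c, w := b, y := d)) \<phi> = eval D F (e(y:=S c)) \<phi>"
      by (rule eval_cong) (use wf wy b d in auto)
    then show "eval D F (e(y := c, w := b, y := d)) \<phi>" using step[OF c ev] by simp
  qed
  have "eval D F e (And (All y (Imp (ZERO p y) \<phi>))
                     (All y (Imp \<phi> (All w (Imp (SUCC p m w y)
                                                 (All y (Imp (Eq (Var y) (Var w)) \<phi>)))))))"
    using b s by (simp only: eval_And)
  then have "eval D F e (All y \<phi>)" using I by (simp only: eval.simps simp_thms)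
  then show ?thesis using a by simp
qed

lemma induct:
  assumes e: "\<forall>n. e n \<in> D"
  and ev: "\<And>a. a \<in> D \<Longrightarrow> eval D F (e(y:=a)) \<phi> = P a"
  and base: "P zro"
  and step: "\<And>a. a \<in> D \<Longrightarrow> P a \<Longrightarrow> P (S a)"
  and a: "a \<in> D"
  shows "P a"
  using ind_raw[OF e, of y \<phi> a] ev base step a by simp

end



definition Or :: "form \<Rightarrow> form \<Rightarrow> form" where "Or a b = Imp (Neg a) b"
definition Iff :: "form \<Rightarrow> form \<Rightarrow> form" where "Iff a b = And (Imp a b) (Imp b a)"
lemma eval_Or[simp]: "eval D F e (Or a b) = (eval D F e a \<or> eval D F e b)" by (auto simp: Or_def)
lemma eval_Iff[simp]: "eval D F e (Iff a b) = (eval D F e a \<longleftrightarrow> eval D F e b)" by (auto simp: Iff_def)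

definition LEf :: "fsym \<Rightarrow> nat \<Rightarrow> nat \<Rightarrow> nat \<Rightarrow> form" where
  "LEf p x z k = Ex k (Eq (Fn p (Var x) (Var k)) (Var z))"
definition LTf :: "fsym \<Rightarrow> nat \<Rightarrow> nat \<Rightarrow> nat \<Rightarrow> nat \<Rightarrow> form" where
  "LTf p one x z k = Ex k (Eq (Fn p (Fn p (Var x) (Var k)) (Var one)) (Var z))"

context pa
begin

lemma pind:
  assumes e: "\<forall>n. e n \<in> D"
  and ev: "\<And>a. a \<in> D \<Longrightarrow> eval D F (e(y:=a)) \<phi> = P a"
  and base: "P zro"
  and step: "\<And>a. a \<in> D \<Longrightarrow> P a \<Longrightarrow> P (S a)"
  and a: "a \<in> D"
  shows "P a"
  by (rule induct[OF e ev base step a])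

definition E1 :: "nat \<Rightarrow> 'a" where "E1 = env0(1 := one1)"
lemma E1D: "\<forall>n. (E1(k:=a)) n \<in> D" if "a \<in> D" using that by (simp add: E1_def env0_def)
lemma E1[simp]: "E1 0 = zro" "E1 1 = one1" "E1 (Suc 0) = one1" "n \<noteq> 1 \<Longrightarrow> E1 n = zro"
  by (auto simp: E1_def env0_def)

lemma envD_upd: "\<forall>n. e n \<in> D \<Longrightarrow> a \<in> D \<Longrightarrow> \<forall>n. (e(k:=a)) n \<in> D" by simp
lemma E1_envD: "\<forall>n. E1 n \<in> D" by (simp add: E1_def env0_def)

lemmas Dlemmas = envD_upd E1_envD

lemma nat_cases: "a \<in> D \<Longrightarrow> a = zro \<or> (\<exists>b\<in>D. a = S b)"
  by (rule pind[where e=E1 and y=2 and P="\<lambda>a. a = zro \<or> (\<exists>b\<in>D. a = S b)"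
      and \<phi>="Or (Eq (Var 2) (Var 0)) (Ex 3 (Eq (Var 2) (Fn p (Var 3) (Var 1))))"])
     (auto simp: Dlemmas)

lemma nat_casesE: "a \<in> D \<Longrightarrow> (a = zro \<Longrightarrow> P) \<Longrightarrow> (\<And>b. b \<in> D \<Longrightarrow> a = S b \<Longrightarrow> P) \<Longrightarrow> P"
  using nat_cases by blast


lemma add_assoc: assumes "a \<in> D" "b \<in> D" "c \<in> D" shows "(a \<oplus> b) \<oplus> c = a \<oplus> (b \<oplus> c)"
  by (rule pind[where e="E1(2:=a,3:=b)" and y=4 and P="\<lambda>c. (a \<oplus> b) \<oplus> c = a \<oplus> (b \<oplus> c)"
      and \<phi>="Eq (Fn p (Fn p (Var 2) (Var 3)) (Var 4)) (Fn p (Var 2) (Fn p (Var 3) (Var 4)))", OF _ _ _ _ assms(3)])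
     (use assms in \<open>auto simp: Dlemmas A5\<close>)

lemma one_add: assumes "a \<in> D" shows "one1 \<oplus> a = S a"
  by (rule pind[where e="E1" and y=4 and P="\<lambda>a. one1 \<oplus> a = S a"
      and \<phi>="Eq (Fn p (Var 1) (Var 4)) (Fn p (Var 4) (Var 1))", OF _ _ _ _ assms])
     (auto simp: Dlemmas A5)

lemma add_comm: assumes a: "a \<in> D" and b: "b \<in> D" shows "a \<oplus> b = b \<oplus> a"
proof (rule pind[where e="E1(2:=a)" and y=4 and P="\<lambda>b. a \<oplus> b = b \<oplus> a"
      and \<phi>="Eq (Fn p (Var 2) (Var 4)) (Fn p (Var 4) (Var 2))", OF _ _ _ _ b])
  fix b assume b: "b \<in> D" and IH: "a \<oplus> b = b \<oplus> a"
  have "a \<oplus> S b = S (a \<oplus> b)" using a b by (rule A5)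
  also have "\<dots> = S (b \<oplus> a)" using IH by simp
  also have "\<dots> = b \<oplus> S a" using a b by (simp add: A5)
  also have "\<dots> = b \<oplus> (one1 \<oplus> a)" using a by (simp add: one_add)
  also have "\<dots> = S b \<oplus> a" using a b by (simp add: add_assoc)
  finally show "a \<oplus> S b = S b \<oplus> a" .
qed (use a in \<open>auto simp: Dlemmas\<close>)

lemma add_lcomm: "a \<in> D \<Longrightarrow> b \<in> D \<Longrightarrow> c \<in> D \<Longrightarrow> a \<oplus> (b \<oplus> c) = b \<oplus> (a \<oplus> c)"
  by (metis add_assoc add_comm)

lemmas add_ac = add_assoc add_comm add_lcomm

lemma add_cancel: assumes "c \<in> D" shows "\<forall>a\<in>D. \<forall>b\<in>D. a \<oplus> c = b \<oplus> c \<longrightarrow> a = b"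
  by (rule pind[where e="E1" and y=4 and P="\<lambda>c. \<forall>a\<in>D. \<forall>b\<in>D. a \<oplus> c = b \<oplus> c \<longrightarrow> a = b"
      and \<phi>="All 5 (All 6 (Imp (Eq (Fn p (Var 5) (Var 4)) (Fn p (Var 6) (Var 4))) (Eq (Var 5) (Var 6))))", OF _ _ _ _ assms])
     (auto simp: Dlemmas A5)

lemma add_cancel_iff[simp]: "a \<in> D \<Longrightarrow> b \<in> D \<Longrightarrow> c \<in> D \<Longrightarrow> a \<oplus> c = b \<oplus> c \<longleftrightarrow> a = b"
  using add_cancel by blast
lemma add_cancel_iff2[simp]: "a \<in> D \<Longrightarrow> b \<in> D \<Longrightarrow> c \<in> D \<Longrightarrow> c \<oplus> a = c \<oplus> b \<longleftrightarrow> a = b"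
  using add_cancel add_comm by metis
lemma add_self_iff[simp]: "a \<in> D \<Longrightarrow> c \<in> D \<Longrightarrow> a \<oplus> c = a \<longleftrightarrow> c = zro"
  using add_cancel_iff2[of c zro a] by simp
lemma add_self_iff3[simp]: "a \<in> D \<Longrightarrow> c \<in> D \<Longrightarrow> a = a \<oplus> c \<longleftrightarrow> c = zro"
  using add_self_iff by metis
lemma add_self_iff2[simp]: "a \<in> D \<Longrightarrow> c \<in> D \<Longrightarrow> c \<oplus> a = a \<longleftrightarrow> c = zro"
  using add_cancel_iff[of c zro a] by simp

lemma Suc_ne_zero[simp]: "a \<in> D \<Longrightarrow> S a \<noteq> zro" "a \<in> D \<Longrightarrow> zro \<noteq> S a" using A3 by metis+

lemma one_ne_zero[simp]: "one1 \<noteq> zro" "zro \<noteq> one1"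
  using Suc_ne_zero[of zro] by auto

lemma add_eq_zero: assumes "a \<in> D" "b \<in> D" shows "a \<oplus> b = zro \<longleftrightarrow> a = zro \<and> b = zro"
proof
  assume ab: "a \<oplus> b = zro"
  have "b = zro"
  proof (rule nat_casesE[OF assms(2)])
    fix c assume "c \<in> D" "b = S c"
    then have "a \<oplus> b = S (a \<oplus> c)" using assms by (simp add: A5)
    then show ?thesis using ab \<open>c \<in> D\<close> assms by simp
  qed
  then show "a = zro \<and> b = zro" using ab assms by simp
qed (use assms in simp)

lemma mul_0_left[simp]: assumes "a \<in> D" shows "zro \<otimes> a = zro"
  by (rule pind[where e="E1" and y=4 and P="\<lambda>a. zro \<otimes> a = zro"
      and \<phi>="Eq (Fn m (Var 0) (Var 4)) (Var 0)", OF _ _ _ _ assms])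
     (auto simp: Dlemmas A7)

lemma distrib_left: assumes "a \<in> D" "b \<in> D" "c \<in> D" shows "a \<otimes> (b \<oplus> c) = a \<otimes> b \<oplus> a \<otimes> c"
proof (rule pind[where e="E1(2:=a,3:=b)" and y=4 and P="\<lambda>c. a \<otimes> (b \<oplus> c) = a \<otimes> b \<oplus> a \<otimes> c"
      and \<phi>="Eq (Fn m (Var 2) (Fn p (Var 3) (Var 4))) (Fn p (Fn m (Var 2) (Var 3)) (Fn m (Var 2) (Var 4)))", OF _ _ _ _ assms(3)])
  fix c assume c: "c \<in> D" and IH: "a \<otimes> (b \<oplus> c) = a \<otimes> b \<oplus> a \<otimes> c"
  have "a \<otimes> (b \<oplus> S c) = a \<otimes> S (b \<oplus> c)" using assms c by (simp add: A5)
  also have "\<dots> = a \<otimes> (b \<oplus> c) \<oplus> a" using assms c by (simp add: A7)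
  also have "\<dots> = (a \<otimes> b \<oplus> a \<otimes> c) \<oplus> a" using IH by simp
  also have "\<dots> = a \<otimes> b \<oplus> (a \<otimes> c \<oplus> a)" using assms c by (simp add: add_assoc)
  also have "\<dots> = a \<otimes> b \<oplus> a \<otimes> S c" using assms c by (simp add: A7)
  finally show "a \<otimes> (b \<oplus> S c) = a \<otimes> b \<oplus> a \<otimes> S c" .
qed (use assms in \<open>auto simp: Dlemmas\<close>)

lemma mul_Suc_left: assumes "a \<in> D" "b \<in> D" shows "(S b) \<otimes> a = b \<otimes> a \<oplus> a"
proof (rule pind[where e="E1(2:=b)" and y=4 and P="\<lambda>a. (S b) \<otimes> a = b \<otimes> a \<oplus> a"
      and \<phi>="Eq (Fn m (Fn p (Var 2) (Var 1)) (Var 4)) (Fn p (Fn m (Var 2) (Var 4)) (Var 4))", OF _ _ _ _ assms(1)])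
  fix a assume a: "a \<in> D" and IH: "(S b) \<otimes> a = b \<otimes> a \<oplus> a"
  have "(S b) \<otimes> S a = (S b) \<otimes> a \<oplus> S b" using assms a by (simp add: A7)
  also have "\<dots> = (b \<otimes> a \<oplus> a) \<oplus> (b \<oplus> one1)" using IH by simp
  also have "\<dots> = (b \<otimes> a \<oplus> b) \<oplus> (a \<oplus> one1)" using assms a by (simp add: add_ac)
  also have "\<dots> = b \<otimes> S a \<oplus> S a" using assms a by (simp add: A7)
  finally show "(S b) \<otimes> S a = b \<otimes> S a \<oplus> S a" .
qed (use assms in \<open>auto simp: Dlemmas\<close>)

lemma mul_comm: assumes "a \<in> D" "b \<in> D" shows "a \<otimes> b = b \<otimes> a"
proof (rule pind[where e="E1(2:=a)" and y=4 and P="\<lambda>b. a \<otimes> b = b \<otimes> a"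
      and \<phi>="Eq (Fn m (Var 2) (Var 4)) (Fn m (Var 4) (Var 2))", OF _ _ _ _ assms(2)])
  fix b assume b: "b \<in> D" and IH: "a \<otimes> b = b \<otimes> a"
  show "a \<otimes> S b = S b \<otimes> a" using assms b IH by (simp add: A7 mul_Suc_left)
qed (use assms in \<open>auto simp: Dlemmas\<close>)

lemma distrib_right: "a \<in> D \<Longrightarrow> b \<in> D \<Longrightarrow> c \<in> D \<Longrightarrow> (b \<oplus> c) \<otimes> a = b \<otimes> a \<oplus> c \<otimes> a"
  by (metis distrib_left mul_comm Fcl)

lemma mul_assoc: assumes "a \<in> D" "b \<in> D" "c \<in> D" shows "(a \<otimes> b) \<otimes> c = a \<otimes> (b \<otimes> c)"
proof (rule pind[where e="E1(2:=a,3:=b)" and y=4 and P="\<lambda>c. (a \<otimes> b) \<otimes> c = a \<otimes> (b \<otimes> c)"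
      and \<phi>="Eq (Fn m (Fn m (Var 2) (Var 3)) (Var 4)) (Fn m (Var 2) (Fn m (Var 3) (Var 4)))", OF _ _ _ _ assms(3)])
  fix c assume c: "c \<in> D" and IH: "(a \<otimes> b) \<otimes> c = a \<otimes> (b \<otimes> c)"
  show "(a \<otimes> b) \<otimes> S c = a \<otimes> (b \<otimes> S c)" using assms c IH by (simp add: A7 distrib_left)
qed (use assms in \<open>auto simp: Dlemmas\<close>)

lemma mul_lcomm: "a \<in> D \<Longrightarrow> b \<in> D \<Longrightarrow> c \<in> D \<Longrightarrow> a \<otimes> (b \<otimes> c) = b \<otimes> (a \<otimes> c)"
  by (metis mul_assoc mul_comm)

lemmas mul_ac = mul_assoc mul_comm mul_lcomm

lemma mul_0_right: "a \<in> D \<Longrightarrow> a \<otimes> zro = zro" by simp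

lemma mul_eq_zero: assumes "a \<in> D" "b \<in> D" shows "a \<otimes> b = zro \<longleftrightarrow> a = zro \<or> b = zro"
proof
  assume ab: "a \<otimes> b = zro"
  show "a = zro \<or> b = zro"
  proof (rule nat_casesE[OF assms(1)], simp)
    fix a' assume a': "a' \<in> D" "a = S a'"
    show ?thesis
    proof (rule nat_casesE[OF assms(2)], simp)
      fix b' assume b': "b' \<in> D" "b = S b'"
      have "a \<otimes> b = S (a \<otimes> b' \<oplus> a')" using a' b' by (simp add: A7 A5)
      then show ?thesis using ab a' b' by simp
    qed
  qed
qed (use assms in auto)

definition le where "le a b \<longleftrightarrow> (\<exists>c\<in>D. a \<oplus> c = b)"
definition lt where "lt a b \<longleftrightarrow> (\<exists>c\<in>D. S (a \<oplus> c) = b)"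

lemma eval_LEf[simp]: "k \<noteq> x \<Longrightarrow> k \<noteq> z \<Longrightarrow> eval D F e (LEf p x z k) = le (e x) (e z)"
  by (simp add: LEf_def le_def)
lemma eval_LTf[simp]: "k \<noteq> x \<Longrightarrow> k \<noteq> z \<Longrightarrow> k \<noteq> one \<Longrightarrow> e one = one1 \<Longrightarrow>
   eval D F e (LTf p one x z k) = lt (e x) (e z)"
  by (simp add: LTf_def lt_def)

lemma le_refl[simp]: "a \<in> D \<Longrightarrow> le a a" unfolding le_def by (rule bexI[of _ zro]) auto
lemma zero_le[simp]: "a \<in> D \<Longrightarrow> le zro a" unfolding le_def by auto
lemma le_add[simp]: "a \<in> D \<Longrightarrow> c \<in> D \<Longrightarrow> le a (a \<oplus> c)" unfolding le_def by auto
lemma le_add2[simp]: "a \<in> D \<Longrightarrow> c \<in> D \<Longrightarrow> le a (c \<oplus> a)" unfolding le_def using add_comm by auto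
lemma le_trans: "le a b \<Longrightarrow> le b c \<Longrightarrow> a \<in> D \<Longrightarrow> le a c"
  unfolding le_def by (metis add_assoc Fcl)
lemma le_antisym: assumes "le a b" "le b a" "a \<in> D" shows "a = b"
proof -
  obtain c d where cd: "c \<in> D" "d \<in> D" "a \<oplus> c = b" "b \<oplus> d = a" using assms unfolding le_def by blast
  then have "a \<oplus> (c \<oplus> d) = a" using assms(3) by (simp add: add_assoc[symmetric])
  then have "c = zro" using cd assms(3) add_eq_zero by simp
  then show ?thesis using cd assms(3) by simp
qed

lemma lt_le: "lt a b \<Longrightarrow> a \<in> D \<Longrightarrow> le (S a) b"
  unfolding lt_def le_def by (metis add_assoc add_comm Fcl OD)
lemma le_lt: "le (S a) b \<Longrightarrow> a \<in> D \<Longrightarrow> lt a b"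
  unfolding lt_def le_def by (metis add_assoc add_comm Fcl OD)
lemma lt_iff_Suc_le: "a \<in> D \<Longrightarrow> lt a b \<longleftrightarrow> le (S a) b" using lt_le le_lt by blast

lemma lt_imp_le: "lt a b \<Longrightarrow> a \<in> D \<Longrightarrow> le a b"
  unfolding lt_def le_def using A5 by (metis Fcl OD)

lemma lt_iff: assumes "a \<in> D" "b \<in> D" shows "lt a b \<longleftrightarrow> le a b \<and> a \<noteq> b"
proof
  assume "lt a b"
  then obtain c where c: "c \<in> D" "S (a \<oplus> c) = b" unfolding lt_def by blast
  then have "a \<oplus> S c = b" using assms by (simp add: A5)
  then show "le a b \<and> a \<noteq> b" unfolding le_def using c assms by auto
next
  assume "le a b \<and> a \<noteq> b"
  then obtain c where c: "c \<in> D" "a \<oplus> c = b" "a \<noteq> b" unfolding le_def by auto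
  then have "c \<noteq> zro" using assms by auto
  then obtain c' where "c' \<in> D" "c = S c'" using nat_cases c by blast
  then show "lt a b" unfolding lt_def using c assms by (auto simp: A5)
qed

lemma lt_irrefl[simp]: "a \<in> D \<Longrightarrow> \<not> lt a a" using lt_iff by blast
lemma not_lt_zero[simp]: "a \<in> D \<Longrightarrow> \<not> lt a zro" unfolding lt_def by auto

lemma le_zero_iff[simp]: "a \<in> D \<Longrightarrow> le a zro \<longleftrightarrow> a = zro"
  unfolding le_def using add_eq_zero by auto

lemma lt_Suc_iff: assumes "a \<in> D" "b \<in> D" shows "lt a (S b) \<longleftrightarrow> le a b"
  unfolding lt_def le_def using assms by auto

lemma le_Suc_iff: assumes "a \<in> D" "b \<in> D" shows "le a (S b) \<longleftrightarrow> le a b \<or> a = S b"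
  using lt_Suc_iff[OF assms] lt_iff[OF assms(1)] assms by auto

lemma zero_lt_iff: "a \<in> D \<Longrightarrow> lt zro a \<longleftrightarrow> a \<noteq> zro"
  using lt_iff by auto

lemma lt_Suc_self[simp]: "a \<in> D \<Longrightarrow> lt a (S a)" using lt_Suc_iff by simp

lemma le_total: assumes "a \<in> D" shows "\<forall>b\<in>D. le a b \<or> le b a"
proof (rule pind[where e="E1" and y=4 and P="\<lambda>a. \<forall>b\<in>D. le a b \<or> le b a"
      and \<phi>="All 5 (Or (LEf p 4 5 6) (LEf p 5 4 6))", OF _ _ _ _ assms])
  fix a assume a: "a \<in> D" and IH: "\<forall>b\<in>D. le a b \<or> le b a"
  show "\<forall>b\<in>D. le (S a) b \<or> le b (S a)"
  proof
    fix b assume b: "b \<in> D"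
    show "le (S a) b \<or> le b (S a)"
    proof (cases "le b a")
      case True then show ?thesis using a b le_trans[of b a "S a"] by simp
    next
      case False
      then have "le a b" using IH b by blast
      then have "lt a b \<or> a = b" using lt_iff a b by auto
      then show ?thesis using lt_le a b by auto
    qed
  qed
qed (auto simp: Dlemmas)

lemma linear: "a \<in> D \<Longrightarrow> b \<in> D \<Longrightarrow> lt a b \<or> a = b \<or> lt b a"
  using le_total lt_iff by blast

lemma not_lt: "a \<in> D \<Longrightarrow> b \<in> D \<Longrightarrow> \<not> lt a b \<longleftrightarrow> le b a"
  by (metis le_antisym le_total lt_iff)

lemma lt_le_trans: "lt a b \<Longrightarrow> le b c \<Longrightarrow> a \<in> D \<Longrightarrow> lt a c"
  using lt_le le_lt le_trans by (meson Fcl OD)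
lemma le_lt_trans: "le a b \<Longrightarrow> lt b c \<Longrightarrow> a \<in> D \<Longrightarrow> b \<in> D \<Longrightarrow> lt a c"
proof -
  assume "le a b" "lt b c" "a \<in> D" "b \<in> D"
  then have "le (S b) c" using lt_le by blast
  moreover have "le (S a) (S b)" using \<open>le a b\<close> \<open>a \<in> D\<close> \<open>b \<in> D\<close> unfolding le_def
    by (metis add_assoc add_comm OD)
  ultimately show "lt a c" using le_lt le_trans \<open>a \<in> D\<close> by (meson Fcl OD)
qed
lemma lt_trans: "lt a b \<Longrightarrow> lt b c \<Longrightarrow> a \<in> D \<Longrightarrow> b \<in> D \<Longrightarrow> lt a c"
  using lt_imp_le le_lt_trans by blast

lemma add_le_mono: "le a b \<Longrightarrow> c \<in> D \<Longrightarrow> a \<in> D \<Longrightarrow> le (a \<oplus> c) (b \<oplus> c)"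
  unfolding le_def by (metis add_assoc add_comm)
lemma add_le_cancel: assumes "le (a \<oplus> c) (b \<oplus> c)" "a \<in> D" "b \<in> D" "c \<in> D" shows "le a b"
proof -
  obtain k where "k \<in> D" "(a \<oplus> c) \<oplus> k = b \<oplus> c" using assms unfolding le_def by blast
  then have "(a \<oplus> k) \<oplus> c = b \<oplus> c" using assms by (metis add_assoc add_comm)
  then show ?thesis unfolding le_def using assms \<open>k \<in> D\<close> by auto
qed
lemma add_lt_mono: "lt a b \<Longrightarrow> c \<in> D \<Longrightarrow> a \<in> D \<Longrightarrow> lt (a \<oplus> c) (b \<oplus> c)"
  unfolding lt_def by (metis add_assoc add_comm Fcl OD)
lemma add_le_mono2: "le a b \<Longrightarrow> c \<in> D \<Longrightarrow> a \<in> D \<Longrightarrow> le (c \<oplus> a) (c \<oplus> b)"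
  unfolding le_def by (metis add_assoc)

lemma mul_le_mono: "le a b \<Longrightarrow> c \<in> D \<Longrightarrow> a \<in> D \<Longrightarrow> le (a \<otimes> c) (b \<otimes> c)"
  unfolding le_def by (metis distrib_right Fcl)
lemma mul_le_mono2: "le a b \<Longrightarrow> c \<in> D \<Longrightarrow> a \<in> D \<Longrightarrow> le (c \<otimes> a) (c \<otimes> b)"
  unfolding le_def by (metis distrib_left Fcl)

lemma mul_lt_mono: assumes "lt a b" "c \<in> D" "c \<noteq> zro" "a \<in> D" shows "lt (a \<otimes> c) (b \<otimes> c)"
proof -
  obtain k where k: "k \<in> D" "S (a \<oplus> k) = b" using assms unfolding lt_def by blast
  obtain c' where c': "c' \<in> D" "c = S c'" using nat_cases assms by blast
  have "b \<otimes> c = a \<otimes> c \<oplus> (k \<otimes> c \<oplus> c)" using k assms by (metis distrib_right mul_Suc_left add_assoc Fcl)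
  also have "\<dots> = S (a \<otimes> c \<oplus> (k \<otimes> c \<oplus> c'))" using c' k assms by (simp add: A5)
  finally show ?thesis unfolding lt_def using k c' assms by auto
qed

lemma mul_cancel: assumes "a \<otimes> c = b \<otimes> c" "c \<in> D" "c \<noteq> zro" "a \<in> D" "b \<in> D" shows "a = b"
  using linear[OF assms(4,5)] mul_lt_mono[OF _ assms(2,3)] assms lt_irrefl by (metis Fcl)

lemma le_one_iff: "a \<in> D \<Longrightarrow> le a one1 \<longleftrightarrow> a = zro \<or> a = one1"
  using le_Suc_iff[of a zro] by auto

lemma mul_eq_one: assumes "a \<otimes> b = one1" "a \<in> D" "b \<in> D" shows "a = one1"
proof -
  have "b \<noteq> zro" using assms by auto
  then obtain b' where b': "b' \<in> D" "b = S b'" using nat_cases assms by blast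
  then have "a \<otimes> b = a \<otimes> b' \<oplus> a" using assms by (simp add: A7)
  then have "le a one1" using assms b' le_add2[of a "a \<otimes> b'"] by simp
  moreover have "a \<noteq> zro" using assms by auto
  ultimately show ?thesis using le_one_iff assms by auto
qed

lemma sind:
  assumes e: "\<forall>n. e n \<in> D"
  and ev: "\<And>a. a \<in> D \<Longrightarrow> eval D F (e(y:=a)) \<phi> = P a"
  and step: "\<And>a. a \<in> D \<Longrightarrow> (\<And>b. b \<in> D \<Longrightarrow> lt b a \<Longrightarrow> P b) \<Longrightarrow> P a"
  and a: "a \<in> D"
  shows "P a"
proof -
  define n where "n = Suc (max y (fmax \<phi>))"
  define k where "k = n + 1"
  define o' where "o' = n + 2"
  have neq: "n \<noteq> y" "y \<noteq> n" "k \<noteq> y" "y \<noteq> k" "o' \<noteq> y" "y \<noteq> o'" "k \<noteq> n" "n \<noteq> k"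
    "o' \<noteq> n" "n \<noteq> o'" "k \<noteq> o'" "o' \<noteq> k"
    unfolding n_def k_def o'_def by auto
  have nf: "n \<notin> fv \<phi>" unfolding n_def using fv_fmax by fastforce
  define \<psi> where "\<psi> = All y (Imp (Ex k (Ex o' (And (ZERO m o')
      (Eq (Fn p (Fn p (Var y) (Var k)) (Var o')) (Var n))))) \<phi>)"
  have evpsi: "eval D F (e(n:=c)) \<psi> = (\<forall>b\<in>D. lt b c \<longrightarrow> P b)" if c: "c \<in> D" for c
  proof -
    have "eval D F (e(n:=c)) \<psi> = (\<forall>b\<in>D. lt b c \<longrightarrow> eval D F (e(n:=c, y:=b)) \<phi>)"
      unfolding \<psi>_def lt_def using neq by (simp add: Bex_def conj_commute)
    also have "\<dots> = (\<forall>b\<in>D. lt b c \<longrightarrow> eval D F (e(y:=b)) \<phi>)"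
    proof -
      have "\<And>b. eval D F (e(n:=c, y:=b)) \<phi> = eval D F (e(y:=b)) \<phi>"
        by (rule eval_cong) (use nf in auto)
      then show ?thesis by simp
    qed
    also have "\<dots> = (\<forall>b\<in>D. lt b c \<longrightarrow> P b)" using ev by simp
    finally show ?thesis .
  qed
  have "\<forall>b\<in>D. lt b (S a) \<longrightarrow> P b"
  proof (rule pind[where e=e and y=n and P="\<lambda>c. \<forall>b\<in>D. lt b c \<longrightarrow> P b" and \<phi>=\<psi>])
    fix c assume c: "c \<in> D" and IH: "\<forall>b\<in>D. lt b c \<longrightarrow> P b"
    show "\<forall>b\<in>D. lt b (S c) \<longrightarrow> P b"
    proof (intro ballI impI)
      fix b assume b: "b \<in> D" and "lt b (S c)"
      then have "lt b c \<or> b = c" using lt_Suc_iff lt_iff c by auto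
      then show "P b" using IH step c b by auto
    qed
  qed (use e evpsi a in auto)
  then show ?thesis using a by simp
qed

lemma lnp:
  assumes e: "\<forall>n. e n \<in> D"
  and ev: "\<And>a. a \<in> D \<Longrightarrow> eval D F (e(y:=a)) \<phi> = P a"
  and Pa: "P a" and a: "a \<in> D"
  shows "\<exists>b\<in>D. P b \<and> (\<forall>c\<in>D. lt c b \<longrightarrow> \<not> P c)"
proof (rule ccontr)
  assume no: "\<not> ?thesis"
  have "\<not> P a"
  proof (rule sind[where e=e and y=y and \<phi>="Neg \<phi>" and P="\<lambda>a. \<not> P a"])
    fix a assume "a \<in> D" "\<And>b. b \<in> D \<Longrightarrow> lt b a \<Longrightarrow> \<not> P b"
    then show "\<not> P a" using no by blast
  qed (use e ev a in auto)
  then show False using Pa by simp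
qed

lemma divmod: assumes d: "d \<in> D" "d \<noteq> zro" and a: "a \<in> D"
  shows "\<exists>q\<in>D. \<exists>r\<in>D. a = q \<otimes> d \<oplus> r \<and> lt r d"
proof (rule pind[where e="E1(3:=d)" and y=4 and P="\<lambda>a. \<exists>q\<in>D. \<exists>r\<in>D. a = q \<otimes> d \<oplus> r \<and> lt r d"
    and \<phi>="Ex 5 (Ex 6 (And (Eq (Var 4) (Fn p (Fn m (Var 5) (Var 3)) (Var 6))) (LTf p 1 6 3 7)))", OF _ _ _ _ a])
  fix a assume a: "a \<in> D" and IH: "\<exists>q\<in>D. \<exists>r\<in>D. a = q \<otimes> d \<oplus> r \<and> lt r d"
  then obtain q r where qr: "q \<in> D" "r \<in> D" "a = q \<otimes> d \<oplus> r" "lt r d" by blast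
  have Sa: "S a = q \<otimes> d \<oplus> S r" using qr d by (simp add: A5)
  have "le (S r) d" using qr lt_le by blast
  then have "lt (S r) d \<or> S r = d" using lt_iff qr d by auto
  then show "\<exists>q\<in>D. \<exists>r\<in>D. S a = q \<otimes> d \<oplus> r \<and> lt r d"
  proof
    assume "lt (S r) d" then show ?thesis using Sa qr by (intro bexI[of _ q] bexI[of _ "S r"]) auto
  next
    assume "S r = d"
    then have "S a = (S q) \<otimes> d \<oplus> zro" using Sa qr d by (simp add: mul_Suc_left)
    moreover have "lt zro d" using d zero_lt_iff by auto
    ultimately show ?thesis using qr by (intro bexI[of _ "S q"] bexI[of _ zro]) auto
  qed
next
  show "\<exists>q\<in>D. \<exists>r\<in>D. zro = q \<otimes> d \<oplus> r \<and> lt r d"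
    using d zero_lt_iff by (intro bexI[of _ zro]) auto
qed (use d in \<open>auto simp: Dlemmas\<close>)

definition dv where "dv a b \<longleftrightarrow> (\<exists>k\<in>D. b = a \<otimes> k)"

lemma dv_refl[simp]: "a \<in> D \<Longrightarrow> dv a a" unfolding dv_def by (rule bexI[of _ one1]) auto
lemma dv_zero[simp]: "a \<in> D \<Longrightarrow> dv a zro" unfolding dv_def by (rule bexI[of _ zro]) auto
lemma one_dv[simp]: "a \<in> D \<Longrightarrow> dv one1 a" unfolding dv_def by (rule bexI[of _ a]) auto
lemma dv_trans: "dv a b \<Longrightarrow> dv b c \<Longrightarrow> a \<in> D \<Longrightarrow> dv a c"
  unfolding dv_def by (metis mul_assoc Fcl)
lemma dv_mult: "dv a b \<Longrightarrow> c \<in> D \<Longrightarrow> a \<in> D \<Longrightarrow> dv a (b \<otimes> c)"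
  unfolding dv_def by (metis mul_assoc Fcl)
lemma dv_mult2: "a \<in> D \<Longrightarrow> c \<in> D \<Longrightarrow> dv a (c \<otimes> a)"
  unfolding dv_def by (metis mul_comm)
lemma dv_mult3: "a \<in> D \<Longrightarrow> c \<in> D \<Longrightarrow> dv a (a \<otimes> c)"
  unfolding dv_def by blast
lemma dv_add: "dv a b \<Longrightarrow> dv a c \<Longrightarrow> a \<in> D \<Longrightarrow> dv a (b \<oplus> c)"
  unfolding dv_def by (metis distrib_left Fcl)
lemma dv_sub: assumes "dv a b" "dv a (b \<oplus> c)" "a \<in> D" "b \<in> D" "c \<in> D" shows "dv a c"
proof -
  obtain k l where kl: "k \<in> D" "l \<in> D" "b = a \<otimes> k" "b \<oplus> c = a \<otimes> l" using assms unfolding dv_def by blast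
  have "le k l \<or> le l k" using le_total kl by blast
  then show ?thesis
  proof
    assume "le k l"
    then obtain j where j: "j \<in> D" "l = k \<oplus> j" unfolding le_def by blast
    then have "b \<oplus> c = b \<oplus> a \<otimes> j" using kl assms by (simp add: distrib_left)
    then show ?thesis unfolding dv_def using j assms by auto
  next
    assume "le l k"
    then obtain j where j: "j \<in> D" "k = l \<oplus> j" unfolding le_def by blast
    then have "b = (b \<oplus> c) \<oplus> a \<otimes> j" using kl assms by (simp add: distrib_left)
    then have "b \<oplus> (c \<oplus> a \<otimes> j) = b" using assms j by (simp add: add_assoc)
    then have "c = zro" using assms j add_eq_zero by simp
    then show ?thesis using assms by simp
  qed
qed

lemma dv_one: "dv a one1 \<Longrightarrow> a \<in> D \<Longrightarrow> a = one1"
  unfolding dv_def using mul_eq_one by metis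

definition coprime where "coprime u v \<longleftrightarrow> (\<forall>f\<in>D. dv f u \<and> dv f v \<longrightarrow> f = one1)"

lemma euclid: assumes uvw: "u \<in> D" "v \<in> D" "w \<in> D" and cp: "coprime u v" and d: "dv u (w \<otimes> v)"
  shows "dv u w"
proof (cases "v = zro")
  case True
  then have "u = one1" using cp uvw unfolding coprime_def by auto
  then show ?thesis using uvw by simp
next
  case False
  let ?X = "\<lambda>s. s \<noteq> zro \<and> dv u (w \<otimes> s)"
  have "\<exists>b\<in>D. ?X b \<and> (\<forall>c\<in>D. lt c b \<longrightarrow> \<not> ?X c)"
    by (rule lnp[where e="E1(2:=w,3:=u)" and y=4 and a=v and
        \<phi>="And (Neg (Eq (Var 4) (Var 0))) (Ex 5 (Eq (Fn m (Var 2) (Var 4)) (Fn m (Var 3) (Var 5))))"])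
      (use uvw d False in \<open>auto simp: Dlemmas dv_def\<close>)
  then obtain s where s: "s \<in> D" "s \<noteq> zro" "dv u (w \<otimes> s)" and min: "\<forall>c\<in>D. lt c s \<longrightarrow> \<not> ?X c"
    by blast
  have claim: "dv s t" if t: "t \<in> D" "dv u (w \<otimes> t)" for t
  proof -
    obtain q r where qr: "q \<in> D" "r \<in> D" "t = q \<otimes> s \<oplus> r" "lt r s" using divmod s t by blast
    have "w \<otimes> t = (w \<otimes> s) \<otimes> q \<oplus> w \<otimes> r" using qr s uvw by (simp add: distrib_left mul_ac)
    moreover have "dv u ((w \<otimes> s) \<otimes> q)" using dv_mult s qr uvw by simp
    ultimately have "dv u (w \<otimes> r)" using dv_sub[of u "(w \<otimes> s) \<otimes> q" "w \<otimes> r"] t qr s uvw by simp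
    then have "r = zro" using min qr by auto
    then show "dv s t" using qr s unfolding dv_def by (metis mul_comm add0(1) Fcl)
  qed
  have "dv s u" using claim uvw dv_mult2 by simp
  moreover have "dv s v" using claim uvw d by simp
  ultimately have "s = one1" using cp s unfolding coprime_def by blast
  then show ?thesis using s uvw by simp
qed

lemma coprime_sym: "coprime u v \<Longrightarrow> coprime v u" unfolding coprime_def by blast

definition mm where "mm x d = S ((S x) \<otimes> d)"
lemma mmD[simp]: "x \<in> D \<Longrightarrow> d \<in> D \<Longrightarrow> mm x d \<in> D" unfolding mm_def by simp

lemma cop_d: assumes "x \<in> D" "d \<in> D" shows "coprime (mm x d) d"
  unfolding coprime_def
proof (intro ballI impI)
  fix f assume f: "f \<in> D" "dv f (mm x d) \<and> dv f d"
  then have "dv f ((S x) \<otimes> d)" using assms dv_mult2 dv_trans by (metis Fcl OD)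
  then have "dv f one1" using dv_sub[of f "(S x) \<otimes> d" one1] f assms unfolding mm_def by simp
  then show "f = one1" using dv_one f by simp
qed

definition V where "V d b \<longleftrightarrow> d \<in> D \<and> d \<noteq> zro \<and> (\<forall>k\<in>D. k \<noteq> zro \<and> le k b \<longrightarrow> dv k d)"

lemma cop_mm_lt: assumes V: "V d b" and xa: "x \<in> D" "a \<in> D" "lt a b" "lt x a"
  shows "coprime (mm x d) (mm a d)"
  unfolding coprime_def
proof (intro ballI impI)
  have d: "d \<in> D" "d \<noteq> zro" using V unfolding V_def by auto
  obtain c where c: "c \<in> D" "S (x \<oplus> c) = a" using xa unfolding lt_def by blast
  define t where "t = S c"
  have t: "t \<in> D" "t \<noteq> zro" "a = x \<oplus> t" using c xa unfolding t_def by (auto simp: A5)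
  have "le t a" using t xa by simp
  then have "le t b" using xa lt_imp_le le_trans t by blast
  then have tdv: "dv t d" using V t unfolding V_def by blast
  have mma: "mm a d = mm x d \<oplus> t \<otimes> d"
    using t xa d unfolding mm_def by (simp add: distrib_right add_ac)
  fix f assume f: "f \<in> D" "dv f (mm x d) \<and> dv f (mm a d)"
  then have "dv f (t \<otimes> d)" using dv_sub[of f "mm x d" "t \<otimes> d"] mma t d xa by simp
  moreover have "coprime f d" unfolding coprime_def
  proof (intro ballI impI)
    fix g assume "g \<in> D" "dv g f \<and> dv g d"
    then have "dv g (mm x d)" "dv g d" using dv_trans f by blast+
    then show "g = one1" using cop_d[OF xa(1) d(1)] \<open>g \<in> D\<close> unfolding coprime_def by blast
  qed
  ultimately have "dv f t" using euclid[of f d t] f t d by simp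
  then have "dv f d" using dv_trans tdv f by blast
  then show "f = one1" using f cop_d[OF xa(1) d(1)] unfolding coprime_def by blast
qed

lemma cop_mm: assumes V: "V d b" and xa: "x \<in> D" "a \<in> D" "lt x b" "lt a b" "x \<noteq> a"
  shows "coprime (mm x d) (mm a d)"
  using linear[OF xa(1,2)] cop_mm_lt[OF V] coprime_sym xa by metis

lemma V_exists: assumes "b \<in> D" shows "\<exists>d. V d b"
proof -
  have "\<exists>d\<in>D. d \<noteq> zro \<and> (\<forall>k\<in>D. k \<noteq> zro \<and> le k b \<longrightarrow> dv k d)"
  proof (rule pind[where e=E1 and y=4 and P="\<lambda>b. \<exists>d\<in>D. d \<noteq> zro \<and> (\<forall>k\<in>D. k \<noteq> zro \<and> le k b \<longrightarrow> dv k d)"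
     and \<phi>="Ex 5 (And (Neg (Eq (Var 5) (Var 0))) (All 6 (Imp (And (Neg (Eq (Var 6) (Var 0))) (LEf p 6 4 7))
              (Ex 7 (Eq (Var 5) (Fn m (Var 6) (Var 7)))))))", OF _ _ _ _ assms])
    fix b assume b: "b \<in> D" and IH: "\<exists>d\<in>D. d \<noteq> zro \<and> (\<forall>k\<in>D. k \<noteq> zro \<and> le k b \<longrightarrow> dv k d)"
    then obtain d where d: "d \<in> D" "d \<noteq> zro" "\<forall>k\<in>D. k \<noteq> zro \<and> le k b \<longrightarrow> dv k d" by blast
    have "d \<otimes> S b \<noteq> zro" using d b mul_eq_zero by simp
    moreover have "\<forall>k\<in>D. k \<noteq> zro \<and> le k (S b) \<longrightarrow> dv k (d \<otimes> S b)"
    proof (intro ballI impI)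
      fix k assume k: "k \<in> D" "k \<noteq> zro \<and> le k (S b)"
      then have "le k b \<or> k = S b" using le_Suc_iff b by blast
      then show "dv k (d \<otimes> S b)"
      proof
        assume "le k b" then show ?thesis using d k b dv_mult by simp
      next
        assume "k = S b" then show ?thesis using d b dv_mult2 by simp
      qed
    qed
    ultimately show "\<exists>d\<in>D. d \<noteq> zro \<and> (\<forall>k\<in>D. k \<noteq> zro \<and> le k (S b) \<longrightarrow> dv k d)"
      using d b by (intro bexI[of _ "d \<otimes> S b"]) auto
  next
    show "\<exists>d\<in>D. d \<noteq> zro \<and> (\<forall>k\<in>D. k \<noteq> zro \<and> le k zro \<longrightarrow> dv k d)"
      by (intro bexI[of _ one1]) auto
  qed (auto simp: Dlemmas dv_def)
  then show ?thesis unfolding V_def by blast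
qed

lemma V_D: "V d b \<Longrightarrow> d \<in> D" "V d b \<Longrightarrow> d \<noteq> zro" unfolding V_def by auto

definition mem where "mem x c d b \<longleftrightarrow> lt x b \<and> dv (mm x d) c"

lemma mem_one: assumes "V d b" "x \<in> D" shows "\<not> mem x one1 d b"
proof
  assume "mem x one1 d b"
  then have "dv (mm x d) one1" unfolding mem_def by simp
  then have "mm x d = one1" using dv_one assms V_D by simp
  then have "(S x) \<otimes> d = zro" unfolding mm_def using assms V_D by simp
  then show False using mul_eq_zero assms V_D by simp
qed

lemma mem_adj: assumes V: "V d b" and a: "a \<in> D" "lt a b" and c: "c \<in> D" and x: "x \<in> D"
  shows "mem x (c \<otimes> mm a d) d b \<longleftrightarrow> mem x c d b \<or> x = a"
proof
  assume m: "mem x (c \<otimes> mm a d) d b"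
  show "mem x c d b \<or> x = a"
  proof (cases "x = a")
    case False
    have "coprime (mm x d) (mm a d)" using cop_mm[OF V x a(1) _ a(2) False] m unfolding mem_def by simp
    then have "dv (mm x d) c" using euclid[of "mm x d" "mm a d" c] m x a c V_D[OF V] unfolding mem_def by simp
    then show ?thesis using m unfolding mem_def by simp
  qed simp
next
  assume "mem x c d b \<or> x = a"
  then show "mem x (c \<otimes> mm a d) d b"
  proof
    assume "mem x c d b" then show ?thesis using dv_mult a c x V_D[OF V] unfolding mem_def by simp
  next
    assume "x = a" then show ?thesis using dv_mult2 a c V_D[OF V] unfolding mem_def by simp
  qed
qed

definition Memf where "Memf x c d b k = And (LTf p 1 x b k)
   (Ex k (Eq (Var c) (Fn m (Fn p (Fn m (Fn p (Var x) (Var 1)) (Var d)) (Var 1)) (Var k))))"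

lemma eval_Memf[simp]: "k \<noteq> x \<Longrightarrow> k \<noteq> c \<Longrightarrow> k \<noteq> d \<Longrightarrow> k \<noteq> b \<Longrightarrow> k \<noteq> 1 \<Longrightarrow> e 1 = one1 \<Longrightarrow>
  eval D F e (Memf x c d b k) = mem (e x) (e c) (e d) (e b)"
  unfolding Memf_def mem_def mm_def dv_def by auto

lemma reencode: assumes V: "V d b" "V d' b'" and bb: "le b b'" "b \<in> D" "b' \<in> D" and c: "c \<in> D"
  shows "\<exists>c'\<in>D. \<forall>x\<in>D. mem x c' d' b' \<longleftrightarrow> mem x c d b"
proof -
  have dd: "d \<in> D" "d' \<in> D" using V V_D by auto
  have "\<exists>c'\<in>D. \<forall>x\<in>D. mem x c' d' b' \<longleftrightarrow> (lt x b \<and> mem x c d b)"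
  proof (rule pind[where e="E1(2:=c, 3:=d, 4:=b, 5:=d', 6:=b')" and y=7
      and P="\<lambda>k. \<exists>c'\<in>D. \<forall>x\<in>D. mem x c' d' b' \<longleftrightarrow> (lt x k \<and> mem x c d b)"
      and \<phi>="Ex 8 (All 9 (Iff (Memf 9 8 5 6 10) (And (LTf p 1 9 7 10) (Memf 9 2 3 4 10))))", OF _ _ _ _ bb(2)])
    fix k assume k: "k \<in> D" and IH: "\<exists>c'\<in>D. \<forall>x\<in>D. mem x c' d' b' \<longleftrightarrow> (lt x k \<and> mem x c d b)"
    then obtain c' where c': "c' \<in> D" "\<forall>x\<in>D. mem x c' d' b' \<longleftrightarrow> (lt x k \<and> mem x c d b)" by blast
    have ltS: "\<And>x. x \<in> D \<Longrightarrow> lt x (S k) \<longleftrightarrow> lt x k \<or> x = k"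
      using lt_Suc_iff lt_iff k by auto
    show "\<exists>c'\<in>D. \<forall>x\<in>D. mem x c' d' b' \<longleftrightarrow> (lt x (S k) \<and> mem x c d b)"
    proof (cases "mem k c d b")
      case True
      then have "lt k b'" using bb k lt_le_trans unfolding mem_def by blast
      then have "\<forall>x\<in>D. mem x (c' \<otimes> mm k d') d' b' \<longleftrightarrow> (lt x (S k) \<and> mem x c d b)"
        using mem_adj[OF V(2) k _ c'(1)] c'(2) ltS True by auto
      then show ?thesis using c' k dd by (intro bexI[of _ "c' \<otimes> mm k d'"]) auto
    next
      case False
      then have "\<forall>x\<in>D. mem x c' d' b' \<longleftrightarrow> (lt x (S k) \<and> mem x c d b)"
        using c'(2) ltS by auto
      then show ?thesis using c' by blast
    qed
  next
    show "\<exists>c'\<in>D. \<forall>x\<in>D. mem x c' d' b' \<longleftrightarrow> (lt x zro \<and> mem x c d b)"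
      using mem_one[OF V(2)] by (intro bexI[of _ one1]) auto
  qed (use bb c dd in \<open>auto simp: Dlemmas\<close>)
  then show ?thesis unfolding mem_def by auto
qed

lemma extend: assumes V: "V d b" and b: "b \<in> D" and c: "c \<in> D" and a: "a \<in> D"
  shows "\<exists>c'\<in>D. \<exists>d'. \<exists>b'\<in>D. V d' b' \<and> (\<forall>x\<in>D. mem x c' d' b' \<longleftrightarrow> mem x c d b \<or> x = a)"
proof -
  define b' where "b' = S (a \<oplus> b)"
  have b'D: "b' \<in> D" using a b unfolding b'_def by simp
  have "lt a b'" using a b unfolding b'_def lt_def by blast
  moreover have "lt b b'" using a b add_comm[of b a] unfolding b'_def lt_def by (intro bexI[of _ a]) auto
  then have "le b b'" using lt_imp_le b by blast
  ultimately have b': "b' \<in> D" "le b b'" "lt a b'" using b'D by auto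
  obtain d' where d': "V d' b'" using V_exists b' by blast
  obtain c' where c': "c' \<in> D" "\<forall>x\<in>D. mem x c' d' b' \<longleftrightarrow> mem x c d b"
    using reencode[OF V d' b'(2) b b'(1) c] by blast
  have "\<forall>x\<in>D. mem x (c' \<otimes> mm a d') d' b' \<longleftrightarrow> mem x c d b \<or> x = a"
    using mem_adj[OF d' a b'(3) c'(1)] c'(2) by auto
  then show ?thesis using c' a b' d' V_D[OF d'] by (intro bexI[of _ "c' \<otimes> mm a d'"] exI[of _ d'] bexI[of _ b']) auto
qed

lemma V_init: "V one1 zro" unfolding V_def by auto

end


context pa
begin

definition pr where "pr i j = (i \<oplus> j) \<otimes> (i \<oplus> j) \<oplus> i"
lemma prD[simp]: "i \<in> D \<Longrightarrow> j \<in> D \<Longrightarrow> pr i j \<in> D" unfolding pr_def by simp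

lemma pr_lt: assumes ij: "i \<in> D" "j \<in> D" "i' \<in> D" "j' \<in> D" and st: "lt (i \<oplus> j) (i' \<oplus> j')"
  shows "lt (pr i j) (pr i' j')"
proof -
  define s where "s = i \<oplus> j"
  define t where "t = i' \<oplus> j'"
  have sD: "s \<in> D" "t \<in> D" using ij unfolding s_def t_def by auto
  have lst: "lt s t" using st unfolding s_def t_def .
  have "le (S s) t" using lt_le lst sD by blast
  then have "le (t \<otimes> S s) (t \<otimes> t)" using mul_le_mono2 sD by simp
  then have 1: "le (t \<otimes> s \<oplus> t) (t \<otimes> t)" using sD by (simp add: A7)
  have "le (s \<otimes> s) (t \<otimes> s)" using mul_le_mono lt_imp_le lst sD by blast
  then have "le (s \<otimes> s \<oplus> t) (t \<otimes> s \<oplus> t)" using add_le_mono sD by simp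
  then have 2: "le (s \<otimes> s \<oplus> t) (t \<otimes> t)" using 1 le_trans sD by simp
  have "le i s" using ij unfolding s_def by simp
  then have "lt i t" using le_lt_trans lst ij sD by blast
  then have "lt (i \<oplus> s \<otimes> s) (t \<oplus> s \<otimes> s)" using add_lt_mono sD ij by simp
  then have "lt (s \<otimes> s \<oplus> i) (s \<otimes> s \<oplus> t)" using add_comm sD ij by (metis Fcl)
  then have "lt (s \<otimes> s \<oplus> i) (t \<otimes> t)" using lt_le_trans 2 sD ij by (meson Fcl)
  moreover have "le (t \<otimes> t) (t \<otimes> t \<oplus> i')" using sD ij by simp
  ultimately have "lt (s \<otimes> s \<oplus> i) (t \<otimes> t \<oplus> i')" using lt_le_trans sD ij by (meson Fcl)
  then show ?thesis unfolding pr_def s_def t_def .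
qed

lemma pr_inj: assumes ij: "i \<in> D" "j \<in> D" "i' \<in> D" "j' \<in> D" and eq: "pr i j = pr i' j'"
  shows "i = i' \<and> j = j'"
proof -
  have "lt (i \<oplus> j) (i' \<oplus> j') \<or> i \<oplus> j = i' \<oplus> j' \<or> lt (i' \<oplus> j') (i \<oplus> j)"
    using linear ij by simp
  moreover have "\<not> lt (i \<oplus> j) (i' \<oplus> j')" using pr_lt[OF ij] eq ij by auto
  moreover have "\<not> lt (i' \<oplus> j') (i \<oplus> j)" using pr_lt[OF ij(3,4,1,2)] eq ij by auto
  ultimately have s: "i \<oplus> j = i' \<oplus> j'" by blast
  then have "i = i'" using eq ij unfolding pr_def by simp
  then show ?thesis using s ij by simp
qed

end

locale pa2 = P: pa D F Plus Times + Q: pa D F Plus' Times' for D F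
begin

abbreviation "z1 \<equiv> P.zro"
abbreviation "o1 \<equiv> P.one1"
abbreviation "z2 \<equiv> Q.zro"
abbreviation "o2 \<equiv> Q.one1"
abbreviation "S1 a \<equiv> F Plus a o1"
abbreviation "S2 a \<equiv> F Plus' a o2"

definition Good where "Good c d b \<longleftrightarrow> (\<forall>i\<in>D. \<forall>j\<in>D. P.mem (P.pr i j) c d b \<longrightarrow>
   ((i = z1 \<longrightarrow> j = z2) \<and> (i \<noteq> z1 \<longrightarrow> (\<exists>i'\<in>D. \<exists>j'\<in>D. i = S1 i' \<and> P.mem (P.pr i' j') c d b \<and> j = S2 j'))))"

definition T where "T u v \<longleftrightarrow> (\<exists>c\<in>D. \<exists>d\<in>D. \<exists>b\<in>D. P.V d b \<and> Good c d b \<and> P.mem (P.pr u v) c d b)"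

lemma T_init: "T z1 z2"
proof -
  obtain c' d' b' where c': "c' \<in> D" "b' \<in> D" "P.V d' b'"
    "\<forall>x\<in>D. P.mem x c' d' b' \<longleftrightarrow> P.mem x o1 o1 z1 \<or> x = P.pr z1 z2"
  proof -
    have "\<exists>c'\<in>D. \<exists>d'. \<exists>b'\<in>D. P.V d' b' \<and> (\<forall>x\<in>D. P.mem x c' d' b' \<longleftrightarrow> P.mem x o1 o1 z1 \<or> x = P.pr z1 z2)"
      by (rule P.extend[OF P.V_init P.ZD P.OD P.prD[OF P.ZD Q.ZD]])
    then show ?thesis using that by blast
  qed
  have mem: "\<forall>x\<in>D. P.mem x c' d' b' \<longleftrightarrow> x = P.pr z1 z2"
    using P.mem_one[OF P.V_init] c'(4) by blast
  have "Good c' d' b'" unfolding Good_def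
  proof (intro ballI impI)
    fix i j assume ij: "i \<in> D" "j \<in> D" "P.mem (P.pr i j) c' d' b'"
    then have "P.pr i j = P.pr z1 z2" using mem by simp
    then have "i = z1 \<and> j = z2" using P.pr_inj[OF ij(1,2) P.ZD Q.ZD] by blast
    then show "(i = z1 \<longrightarrow> j = z2) \<and> (i \<noteq> z1 \<longrightarrow> (\<exists>i'\<in>D. \<exists>j'\<in>D. i = S1 i' \<and> P.mem (P.pr i' j') c' d' b' \<and> j = S2 j'))" by simp
  qed
  moreover have "P.mem (P.pr z1 z2) c' d' b'" using mem by simp
  moreover have "d' \<in> D" using P.V_D c' by blast
  ultimately show ?thesis unfolding T_def using c' by blast
qed

lemma T_D: "T u v \<Longrightarrow> \<exists>c\<in>D. \<exists>d\<in>D. \<exists>b\<in>D. P.V d b \<and> Good c d b \<and> P.mem (P.pr u v) c d b"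
  unfolding T_def by simp

lemma T_step: assumes uv: "u \<in> D" "v \<in> D" and T: "T u v" shows "T (S1 u) (S2 v)"
proof -
  obtain c d b where cdb: "c \<in> D" "d \<in> D" "b \<in> D" "P.V d b" "Good c d b" "P.mem (P.pr u v) c d b"
    using T unfolding T_def by blast
  obtain c' d' b' where c': "c' \<in> D" "b' \<in> D" "P.V d' b'"
    "\<forall>x\<in>D. P.mem x c' d' b' \<longleftrightarrow> P.mem x c d b \<or> x = P.pr (S1 u) (S2 v)"
    using P.extend[OF cdb(4) cdb(3) cdb(1), of "P.pr (S1 u) (S2 v)"] uv by auto
  have sub: "\<And>x. x \<in> D \<Longrightarrow> P.mem x c d b \<Longrightarrow> P.mem x c' d' b'" using c' by blast
  have "Good c' d' b'" unfolding Good_def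
  proof (intro ballI impI)
    fix i j assume ij: "i \<in> D" "j \<in> D" "P.mem (P.pr i j) c' d' b'"
    then have "P.mem (P.pr i j) c d b \<or> P.pr i j = P.pr (S1 u) (S2 v)" using c' by simp
    then show "(i = z1 \<longrightarrow> j = z2) \<and> (i \<noteq> z1 \<longrightarrow> (\<exists>i'\<in>D. \<exists>j'\<in>D. i = S1 i' \<and> P.mem (P.pr i' j') c' d' b' \<and> j = S2 j'))"
    proof
      assume "P.mem (P.pr i j) c d b"
      then have "(i = z1 \<longrightarrow> j = z2) \<and> (i \<noteq> z1 \<longrightarrow> (\<exists>i'\<in>D. \<exists>j'\<in>D. i = S1 i' \<and> P.mem (P.pr i' j') c d b \<and> j = S2 j'))"
        using cdb(5) ij unfolding Good_def by blast
      then show ?thesis using sub by (meson P.prD)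
    next
      assume "P.pr i j = P.pr (S1 u) (S2 v)"
      then have "i = S1 u \<and> j = S2 v" using P.pr_inj[OF ij(1,2) P.Fcl[OF uv(1) P.OD] Q.Fcl[OF uv(2) Q.OD]] by blast
      moreover have "P.mem (P.pr u v) c' d' b'" using sub cdb(6) uv by simp
      ultimately show ?thesis using uv by auto
    qed
  qed
  moreover have "P.mem (P.pr (S1 u) (S2 v)) c' d' b'" using c' uv by simp
  ultimately show ?thesis unfolding T_def using c' P.V_D by blast
qed

lemma T_zero: assumes "v \<in> D" "T z1 v" shows "v = z2"
proof -
  obtain c d b where cdb: "Good c d b" "P.mem (P.pr z1 v) c d b"
    using assms unfolding T_def by blast
  have "\<forall>i\<in>D. \<forall>j\<in>D. P.mem (P.pr i j) c d b \<longrightarrow> (i = z1 \<longrightarrow> j = z2)"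
    using cdb(1) unfolding Good_def by blast
  then show ?thesis using cdb(2) assms(1) P.ZD by blast
qed

lemma T_suc: assumes "u \<in> D" "w \<in> D" "T (S1 u) w" shows "\<exists>v\<in>D. T u v \<and> w = S2 v"
proof -
  obtain c d b where cdb: "c \<in> D" "d \<in> D" "b \<in> D" "P.V d b" "Good c d b" "P.mem (P.pr (S1 u) w) c d b"
    using assms unfolding T_def by blast
  have G: "\<forall>i\<in>D. \<forall>j\<in>D. P.mem (P.pr i j) c d b \<longrightarrow>
     (i \<noteq> z1 \<longrightarrow> (\<exists>i'\<in>D. \<exists>j'\<in>D. i = S1 i' \<and> P.mem (P.pr i' j') c d b \<and> j = S2 j'))"
    using cdb(5) unfolding Good_def by blast
  have SD: "S1 u \<in> D" "S1 u \<noteq> z1" using assms(1) by auto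
  obtain i' j' where ij: "i' \<in> D" "j' \<in> D" "S1 u = S1 i'" "P.mem (P.pr i' j') c d b" "w = S2 j'"
    using G SD assms(2) cdb(6) by blast
  then have "i' = u" using assms by simp
  then show ?thesis using ij cdb unfolding T_def by blast
qed

end

definition LTt :: "trm \<Rightarrow> nat \<Rightarrow> nat \<Rightarrow> nat \<Rightarrow> form" where
  "LTt x b one k = Ex k (Eq (Fn Plus (Fn Plus x (Var k)) (Var one)) (Var b))"
definition Memt :: "trm \<Rightarrow> nat \<Rightarrow> nat \<Rightarrow> nat \<Rightarrow> nat \<Rightarrow> nat \<Rightarrow> form" where
  "Memt x c d b one k = And (LTt x b one k)
     (Ex k (Eq (Var c) (Fn Times (Fn Plus (Fn Times (Fn Plus x (Var one)) (Var d)) (Var one)) (Var k))))"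
definition prt :: "nat \<Rightarrow> nat \<Rightarrow> trm" where
  "prt i j = Fn Plus (Fn Times (Fn Plus (Var i) (Var j)) (Fn Plus (Var i) (Var j))) (Var i)"
definition Vf :: "nat \<Rightarrow> nat \<Rightarrow> nat \<Rightarrow> nat \<Rightarrow> nat \<Rightarrow> form" where
  "Vf d b z k k2 = And (Neg (Eq (Var d) (Var z))) (All k (Imp (And (Neg (Eq (Var k) (Var z)))
     (Ex k2 (Eq (Fn Plus (Var k) (Var k2)) (Var b)))) (Ex k2 (Eq (Var d) (Fn Times (Var k) (Var k2))))))"
definition Goodf :: "nat \<Rightarrow> nat \<Rightarrow> nat \<Rightarrow> nat \<Rightarrow> nat \<Rightarrow> nat \<Rightarrow> nat \<Rightarrow> nat \<Rightarrow> nat \<Rightarrow> nat \<Rightarrow> nat \<Rightarrow> nat \<Rightarrow> form" where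
  "Goodf c d b z on z' on2 i j i2 j2 k =
  All i (All j (Imp (Memt (prt i j) c d b on k)
     (And (Imp (Eq (Var i) (Var z)) (Eq (Var j) (Var z')))
          (Imp (Neg (Eq (Var i) (Var z)))
               (Ex i2 (Ex j2 (And (Eq (Var i) (Fn Plus (Var i2) (Var on)))
                 (And (Memt (prt i2 j2) c d b on k) (Eq (Var j) (Fn Plus' (Var j2) (Var on2)))))))))))"
definition Theta0 :: form where
  "Theta0 = Ex 6 (Ex 7 (Ex 8 (And (Vf 7 8 2 9 10) (And (Goodf 6 7 8 2 3 4 5 9 10 11 12 13)
      (Memt (prt 0 1) 6 7 8 3 13)))))"
definition Theta :: form where
  "Theta = Ex 2 (Ex 3 (Ex 4 (Ex 5 (And (ZERO Plus 2) (And (ZERO Times 3) (And (ZERO Plus' 4)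
     (And (ZERO Times' 5) Theta0)))))))"

lemma tvars_prt[simp]: "tvars (prt i j) = {i, j}" by (auto simp: prt_def)

lemma fv_Theta: "fv Theta \<subseteq> {0, 1}"
  unfolding Theta_def Theta0_def Vf_def Goodf_def Memt_def LTt_def prt_def ZERO_def And_def Ex_def Neg_def
  by auto

context pa2
begin

lemma evalt_prt[simp]: "evalt F e (prt i j) = P.pr (e i) (e j)"
  by (simp add: prt_def P.pr_def)

lemma eval_LTt[simp]: "k \<notin> tvars x \<Longrightarrow> k \<noteq> b \<Longrightarrow> k \<noteq> one \<Longrightarrow> e one = o1 \<Longrightarrow>
  eval D F e (LTt x b one k) = P.lt (evalt F e x) (e b)"
proof -
  assume a: "k \<notin> tvars x" "k \<noteq> b" "k \<noteq> one" "e one = o1"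
  have "\<And>c. evalt F (e(k:=c)) x = evalt F e x" using a by (intro evalt_cong) auto
  then show ?thesis using a by (simp add: LTt_def P.lt_def)
qed

lemma eval_Memt[simp]: "k \<notin> tvars x \<Longrightarrow> k \<noteq> b \<Longrightarrow> k \<noteq> c \<Longrightarrow> k \<noteq> d \<Longrightarrow> k \<noteq> one \<Longrightarrow> e one = o1 \<Longrightarrow>
  eval D F e (Memt x c d b one k) = P.mem (evalt F e x) (e c) (e d) (e b)"
proof -
  assume a: "k \<notin> tvars x" "k \<noteq> b" "k \<noteq> c" "k \<noteq> d" "k \<noteq> one" "e one = o1"
  have "\<And>c. evalt F (e(k:=c)) x = evalt F e x" using a by (intro evalt_cong) auto
  then show ?thesis using a by (simp add: Memt_def P.mem_def P.dv_def P.mm_def)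
qed

lemma eval_Vf: "(\<forall>n. e n \<in> D) \<Longrightarrow> e 2 = z1 \<Longrightarrow> eval D F e (Vf 7 8 2 9 10) = P.V (e 7) (e 8)"
  by (simp add: Vf_def P.V_def P.le_def P.dv_def)

lemma eval_Goodf: "e 2 = z1 \<Longrightarrow> e 3 = o1 \<Longrightarrow> e 4 = z2 \<Longrightarrow> e 5 = o2 \<Longrightarrow>
   eval D F e (Goodf 6 7 8 2 3 4 5 9 10 11 12 13) = Good (e 6) (e 7) (e 8)"
  by (simp add: Goodf_def Good_def)

lemma eval_Theta0: "(\<forall>n. e n \<in> D) \<Longrightarrow> e 2 = z1 \<Longrightarrow> e 3 = o1 \<Longrightarrow> e 4 = z2 \<Longrightarrow> e 5 = o2 \<Longrightarrow>
   eval D F e Theta0 = T (e 0) (e 1)"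
  by (simp add: Theta0_def eval_Vf eval_Goodf T_def)

lemma eval_Theta: "(\<forall>n. e n \<in> D) \<Longrightarrow> eval D F e Theta = T (e 0) (e 1)"
  by (simp add: Theta_def eval_Theta0)

lemma evalt_D: "(\<forall>n. e n \<in> D) \<Longrightarrow> evalt F e t \<in> D"
  by (induct t) auto

lemma eval_inst: assumes th: "fv th \<subseteq> {0,1}" and t: "0 \<notin> tvars t1" "1 \<notin> tvars t1" "0 \<notin> tvars t2" "1 \<notin> tvars t2"
  and e: "\<forall>n. e n \<in> D"
  shows "eval D F e (inst th t1 t2) = eval D F (e(0:=evalt F e t1, 1:=evalt F e t2)) th"
proof -
  have c: "\<And>a b. evalt F (e(0:=a, 1:=b)) t1 = evalt F e t1" "\<And>a b. evalt F (e(0:=a, 1:=b)) t2 = evalt F e t2"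
    using t by (auto intro: evalt_cong)
  have "evalt F e t1 \<in> D" "evalt F e t2 \<in> D" using evalt_D e by auto
  then show ?thesis unfolding inst_def using c by auto
qed

lemma eval_inst_Theta[simp]: "0 \<notin> tvars t1 \<Longrightarrow> 1 \<notin> tvars t1 \<Longrightarrow> 0 \<notin> tvars t2 \<Longrightarrow> 1 \<notin> tvars t2 \<Longrightarrow>
  (\<forall>n. e n \<in> D) \<Longrightarrow> eval D F e (inst Theta t1 t2) = T (evalt F e t1) (evalt F e t2)"
proof -
  assume a: "0 \<notin> tvars t1" "1 \<notin> tvars t1" "0 \<notin> tvars t2" "1 \<notin> tvars t2" "\<forall>n. e n \<in> D"
  have "\<forall>n. (e(0:=evalt F e t1, 1:=evalt F e t2)) n \<in> D" using a evalt_D by auto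
  then show ?thesis using eval_inst[OF fv_Theta a] eval_Theta by simp
qed

lemmas envs = P.envD_upd P.env0D

lemma T_total: assumes "u \<in> D" shows "\<exists>v\<in>D. T u v"
proof (rule P.pind[where e=P.env0 and y=2 and P="\<lambda>u. \<exists>v\<in>D. T u v"
    and \<phi>="Ex 3 (inst Theta (Var 2) (Var 3))", OF _ _ _ _ assms])
  fix u assume u: "u \<in> D" and "\<exists>v\<in>D. T u v"
  then obtain v where v: "v \<in> D" "T u v" by blast
  then have "T (S1 u) (S2 v)" using T_step u by blast
  then show "\<exists>v\<in>D. T (S1 u) v" using v by (intro bexI[of _ "S2 v"]) auto
next
  show "\<exists>v\<in>D. T z1 v" using T_init by (intro bexI[of _ z2]) auto
qed (auto simp: envs)

lemma T_func: assumes "u \<in> D" shows "\<forall>v\<in>D. \<forall>v'\<in>D. T u v \<and> T u v' \<longrightarrow> v = v'"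
proof (rule P.pind[where e=P.env0 and y=2 and P="\<lambda>u. \<forall>v\<in>D. \<forall>v'\<in>D. T u v \<and> T u v' \<longrightarrow> v = v'"
    and \<phi>="All 3 (All 4 (Imp (And (inst Theta (Var 2) (Var 3)) (inst Theta (Var 2) (Var 4))) (Eq (Var 3) (Var 4))))", OF _ _ _ _ assms])
  fix u assume u: "u \<in> D" and IH: "\<forall>v\<in>D. \<forall>v'\<in>D. T u v \<and> T u v' \<longrightarrow> v = v'"
  show "\<forall>v\<in>D. \<forall>v'\<in>D. T (S1 u) v \<and> T (S1 u) v' \<longrightarrow> v = v'"
  proof (intro ballI impI)
    fix v v' assume vv: "v \<in> D" "v' \<in> D" "T (S1 u) v \<and> T (S1 u) v'"
    then obtain w w' where "w \<in> D" "T u w" "v = S2 w" "w' \<in> D" "T u w'" "v' = S2 w'"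
      using T_suc u by meson
    then show "v = v'" using IH by simp
  qed
next
  show "\<forall>v\<in>D. \<forall>v'\<in>D. T z1 v \<and> T z1 v' \<longrightarrow> v = v'" using T_zero by blast
qed (auto simp: envs)

lemma T_inj: assumes "u \<in> D" shows "\<forall>u'\<in>D. \<forall>v\<in>D. T u v \<and> T u' v \<longrightarrow> u = u'"
proof (rule P.pind[where e=P.env0 and y=2 and P="\<lambda>u. \<forall>u'\<in>D. \<forall>v\<in>D. T u v \<and> T u' v \<longrightarrow> u = u'"
    and \<phi>="All 3 (All 4 (Imp (And (inst Theta (Var 2) (Var 4)) (inst Theta (Var 3) (Var 4))) (Eq (Var 2) (Var 3))))", OF _ _ _ _ assms])
  fix u assume u: "u \<in> D" and IH: "\<forall>u'\<in>D. \<forall>v\<in>D. T u v \<and> T u' v \<longrightarrow> u = u'"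
  show "\<forall>u'\<in>D. \<forall>v\<in>D. T (S1 u) v \<and> T u' v \<longrightarrow> S1 u = u'"
  proof (intro ballI impI)
    fix u' v assume uv: "u' \<in> D" "v \<in> D" "T (S1 u) v \<and> T u' v"
    then obtain w where w: "w \<in> D" "T u w" "v = S2 w" using T_suc u by meson
    show "S1 u = u'"
    proof (rule P.nat_casesE[OF uv(1)])
      assume "u' = z1"
      then have "v = z2" using T_zero uv by simp
      then show ?thesis using w by simp
    next
      fix u'' assume u'': "u'' \<in> D" "u' = S1 u''"
      then obtain w' where w': "w' \<in> D" "T u'' w'" "v = S2 w'" using T_suc uv by meson
      then have "w = w'" using w by simp
      then show ?thesis using IH w w' u'' by auto
    qed
  qed
next
  show "\<forall>u'\<in>D. \<forall>v\<in>D. T z1 v \<and> T u' v \<longrightarrow> z1 = u'"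
  proof (intro ballI impI)
    fix u' v assume uv: "u' \<in> D" "v \<in> D" "T z1 v \<and> T u' v"
    then have v: "v = z2" using T_zero by simp
    show "z1 = u'"
    proof (rule P.nat_casesE[OF uv(1)])
      fix u'' assume u'': "u'' \<in> D" "u' = S1 u''"
      then obtain w' where "w' \<in> D" "v = S2 w'" using T_suc uv by meson
      then show ?thesis using v by simp
    qed simp
  qed
qed (auto simp: envs)

lemma T_onto: assumes "v \<in> D" shows "\<exists>u\<in>D. T u v"
proof (rule Q.pind[where e=P.env0 and y=3 and P="\<lambda>v. \<exists>u\<in>D. T u v"
    and \<phi>="Ex 2 (inst Theta (Var 2) (Var 3))", OF _ _ _ _ assms])
  fix v assume v: "v \<in> D" and "\<exists>u\<in>D. T u v"
  then obtain u where u: "u \<in> D" "T u v" by blast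
  then have "T (S1 u) (S2 v)" using T_step v by blast
  then show "\<exists>u\<in>D. T u (S2 v)" using u by (intro bexI[of _ "S1 u"]) auto
next
  show "\<exists>u\<in>D. T u z2" using T_init by (intro bexI[of _ z1]) auto
qed (auto simp: envs)

lemma T_add: assumes "z \<in> D" shows "\<forall>x\<in>D. \<forall>y\<in>D. \<forall>w\<in>D. T x y \<and> T z w \<longrightarrow> T (F Plus x z) (F Plus' y w)"
proof (rule P.pind[where e=P.env0 and y=2 and P="\<lambda>z. \<forall>x\<in>D. \<forall>y\<in>D. \<forall>w\<in>D. T x y \<and> T z w \<longrightarrow> T (F Plus x z) (F Plus' y w)"
    and \<phi>="All 3 (All 4 (All 5 (Imp (And (inst Theta (Var 3) (Var 4)) (inst Theta (Var 2) (Var 5)))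
       (inst Theta (Fn Plus (Var 3) (Var 2)) (Fn Plus' (Var 4) (Var 5))))))", OF _ _ _ _ assms])
  fix z assume z: "z \<in> D" and IH: "\<forall>x\<in>D. \<forall>y\<in>D. \<forall>w\<in>D. T x y \<and> T z w \<longrightarrow> T (F Plus x z) (F Plus' y w)"
  show "\<forall>x\<in>D. \<forall>y\<in>D. \<forall>w\<in>D. T x y \<and> T (S1 z) w \<longrightarrow> T (F Plus x (S1 z)) (F Plus' y w)"
  proof (intro ballI impI)
    fix x y w assume xyw: "x \<in> D" "y \<in> D" "w \<in> D" "T x y \<and> T (S1 z) w"
    then obtain w0 where w0: "w0 \<in> D" "T z w0" "w = S2 w0" using T_suc z by meson
    then have "T (F Plus x z) (F Plus' y w0)" using IH xyw by blast
    then have "T (S1 (F Plus x z)) (S2 (F Plus' y w0))" using T_step xyw z w0 by simp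
    then show "T (F Plus x (S1 z)) (F Plus' y w)" using w0 xyw z by (simp add: P.A5 Q.A5)
  qed
next
  show "\<forall>x\<in>D. \<forall>y\<in>D. \<forall>w\<in>D. T x y \<and> T z1 w \<longrightarrow> T (F Plus x z1) (F Plus' y w)"
  proof (intro ballI impI)
    fix x y w assume "x \<in> D" "y \<in> D" "w \<in> D" "T x y \<and> T z1 w"
    then have "w = z2" using T_zero by blast
    then show "T (F Plus x z1) (F Plus' y w)" using \<open>x \<in> D\<close> \<open>y \<in> D\<close> \<open>T x y \<and> T z1 w\<close> by simp
  qed
qed (auto simp: envs)

lemma T_mul: assumes "z \<in> D" shows "\<forall>x\<in>D. \<forall>y\<in>D. \<forall>w\<in>D. T x y \<and> T z w \<longrightarrow> T (F Times x z) (F Times' y w)"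
proof (rule P.pind[where e=P.env0 and y=2 and P="\<lambda>z. \<forall>x\<in>D. \<forall>y\<in>D. \<forall>w\<in>D. T x y \<and> T z w \<longrightarrow> T (F Times x z) (F Times' y w)"
    and \<phi>="All 3 (All 4 (All 5 (Imp (And (inst Theta (Var 3) (Var 4)) (inst Theta (Var 2) (Var 5)))
       (inst Theta (Fn Times (Var 3) (Var 2)) (Fn Times' (Var 4) (Var 5))))))", OF _ _ _ _ assms])
  fix z assume z: "z \<in> D" and IH: "\<forall>x\<in>D. \<forall>y\<in>D. \<forall>w\<in>D. T x y \<and> T z w \<longrightarrow> T (F Times x z) (F Times' y w)"
  show "\<forall>x\<in>D. \<forall>y\<in>D. \<forall>w\<in>D. T x y \<and> T (S1 z) w \<longrightarrow> T (F Times x (S1 z)) (F Times' y w)"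
  proof (intro ballI impI)
    fix x y w assume xyw: "x \<in> D" "y \<in> D" "w \<in> D" "T x y \<and> T (S1 z) w"
    then obtain w0 where w0: "w0 \<in> D" "T z w0" "w = S2 w0" using T_suc z by meson
    then have "T (F Times x z) (F Times' y w0)" using IH xyw by blast
    then have "T (F Plus (F Times x z) x) (F Plus' (F Times' y w0) y)"
      using T_add[of x] xyw z w0 by simp
    then show "T (F Times x (S1 z)) (F Times' y w)" using w0 xyw z by (simp add: P.A7 Q.A7)
  qed
next
  show "\<forall>x\<in>D. \<forall>y\<in>D. \<forall>w\<in>D. T x y \<and> T z1 w \<longrightarrow> T (F Times x z1) (F Times' y w)"
  proof (intro ballI impI)
    fix x y w assume "x \<in> D" "y \<in> D" "w \<in> D" "T x y \<and> T z1 w"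
    then have "w = z2" using T_zero by blast
    then show "T (F Times x z1) (F Times' y w)" using \<open>x \<in> D\<close> \<open>y \<in> D\<close> T_init by simp
  qed
qed (auto simp: envs)

lemma isom_true: assumes e: "\<forall>n. e n \<in> D" shows "eval D F e (ISOM Theta)"
proof -
  have tot: "eval D F e (TOTAL Theta) \<longleftrightarrow> (\<forall>a\<in>D. \<exists>b\<in>D. T a b \<and> (\<forall>c\<in>D. T a c \<longrightarrow> c = b))"
    unfolding TOTAL_def using e by simp
  have tot': "\<forall>a\<in>D. \<exists>b\<in>D. T a b \<and> (\<forall>c\<in>D. T a c \<longrightarrow> c = b)"
  proof
    fix a assume a: "a \<in> D"
    then obtain b where b: "b \<in> D" "T a b" using T_total by blast
    then show "\<exists>b\<in>D. T a b \<and> (\<forall>c\<in>D. T a c \<longrightarrow> c = b)" using T_func[OF a] by blast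
  qed
  have onto: "eval D F e (ONTO Theta) \<longleftrightarrow> (\<forall>b\<in>D. \<exists>a\<in>D. T a b)"
    unfolding ONTO_def using e by simp
  have inj: "eval D F e (INJ Theta) \<longleftrightarrow> (\<forall>a\<in>D. \<forall>c\<in>D. \<forall>b\<in>D. T a b \<and> T c b \<longrightarrow> a = c)"
    unfolding INJ_def using e by simp
  have hp: "eval D F e (HOM Plus Plus' Theta) \<longleftrightarrow>
     (\<forall>a\<in>D. \<forall>b\<in>D. \<forall>c\<in>D. \<forall>d\<in>D. T a c \<and> T b d \<longrightarrow> T (F Plus a b) (F Plus' c d))"
    unfolding HOM_def using e by simp
  have hm: "eval D F e (HOM Times Times' Theta) \<longleftrightarrow>
     (\<forall>a\<in>D. \<forall>b\<in>D. \<forall>c\<in>D. \<forall>d\<in>D. T a c \<and> T b d \<longrightarrow> T (F Times a b) (F Times' c d))"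
    unfolding HOM_def using e by simp
  have "\<forall>a\<in>D. \<forall>b\<in>D. \<forall>c\<in>D. \<forall>d\<in>D. T a c \<and> T b d \<longrightarrow> T (F Plus a b) (F Plus' c d)"
    using T_add by blast
  moreover have "\<forall>a\<in>D. \<forall>b\<in>D. \<forall>c\<in>D. \<forall>d\<in>D. T a c \<and> T b d \<longrightarrow> T (F Times a b) (F Times' c d)"
    using T_mul by blast
  moreover have "\<forall>b\<in>D. \<exists>a\<in>D. T a b" using T_onto by blast
  moreover have "\<forall>a\<in>D. \<forall>c\<in>D. \<forall>b\<in>D. T a b \<and> T c b \<longrightarrow> a = c" using T_inj by blast
  ultimately show ?thesis unfolding ISOM_def using tot tot' onto inj hp hm by simp
qed

end

theorem mainTheorem4:
  shows "\<exists>theta. fv theta \<subseteq> {0, 1} \<and>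
           (PA Plus Times \<union> PA Plus' Times') \<turnstile> ISOM theta"
proof (intro exI conjI)
  show "fv Theta \<subseteq> {0, 1}" by (rule fv_Theta)
  show "(PA Plus Times \<union> PA Plus' Times') \<turnstile> ISOM Theta"
  proof (rule completeness)
    show "\<forall>q\<in>PA Plus Times \<union> PA Plus' Times'. fv q = {}" using fv_PA by blast
  next
    fix D :: "trm set set" and F e
    assume cl: "\<forall>f. \<forall>a\<in>D. \<forall>b\<in>D. F f a b \<in> D" and e: "\<forall>n. e n \<in> D"
      and md: "\<forall>q\<in>PA Plus Times \<union> PA Plus' Times'. eval D F e q"
    have allenv: "eval D F e' q" if "q \<in> PA Plus Times \<union> PA Plus' Times'" for q e'
    proof -
      have "fv q = {}" using that fv_PA by blast
      then have "eval D F e' q = eval D F e q" by (intro eval_cong) auto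
      then show ?thesis using md that by simp
    qed
    have ne: "D \<noteq> {}" using e by auto
    interpret pa2 D F
      by unfold_locales (use ne allenv cl in auto)
    show "eval D F e (ISOM Theta)" by (rule isom_true[OF e])
  qed
qed


end
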